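(* Let $k\in l_2(X)$ with $\check k\in L^\infty(G)$, and let $R(\check k)$ denote the essential range of $\check k$. Then $$R(\check k)\subseteq\sigma(W_k)\subseteq\overline{\operatorname{conv}}\,R(\check k),$$ where $\sigma(W_k)$ is the spectrum of $W_k$ on $l_2(X_+)$ and $\overline{\operatorname{conv}}$ denotes the closed convex hull in $\mathbb C$.
   Context: $X$ is a discrete linearly ordered abelian group with positive cone $X_+$; $G$ is its compact dual group with normalized Haar measure. $\check k(x)=\sum_{\xi\in X}k(\xi)\xi(x)$. $W_kg=1_{X_+}(k\ast g)$ on $l_2(X_+)$. *)

theory Defs
  imports "HOL-Analysis.Analysis" "HOL-Probability.Probability"
begin

text \<open>The dual group G of the discrete abelian group X: all characters X \<rightarrow> T.
  The pairing xi(x) of xi in X and x in G is written x xi.\<close>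
definition dual_group :: "('x::ab_group_add \<Rightarrow> complex) set" where
  "dual_group = {\<omega>. (\<forall>a b. \<omega> (a + b) = \<omega> a * \<omega> b) \<and> (\<forall>a. cmod (\<omega> a) = 1)}"

text \<open>Normalized Haar measure on G (on the sigma-algebra generated by the evaluation
  maps, i.e. the Baire sets of the compact group G): translation-invariant probability.\<close>
definition haar_dual :: "('x::ab_group_add \<Rightarrow> complex) measure \<Rightarrow> bool" where
  "haar_dual \<mu> \<longleftrightarrow> prob_space \<mu> \<and> space \<mu> = dual_group \<and>
     sets \<mu> = sigma_sets dual_group {{\<omega> \<in> dual_group. \<omega> \<xi> \<in> B} | \<xi> B. B \<in> sets borel} \<and>
     (\<forall>\<gamma>\<in>dual_group. (\<lambda>\<omega> \<xi>. \<gamma> \<xi> * \<omega> \<xi>) \<in> \<mu> \<rightarrow>\<^sub>M \<mu> \<and>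
        distr \<mu> \<mu> (\<lambda>\<omega> \<xi>. \<gamma> \<xi> * \<omega> \<xi>) = \<mu>)"

text \<open>h represents check k: h is the L2(G)-limit of the finite partial sums of
  sum_xi k(xi) xi(x).\<close>
definition is_check :: "('x::ab_group_add \<Rightarrow> complex) measure \<Rightarrow> ('x \<Rightarrow> complex)
    \<Rightarrow> (('x \<Rightarrow> complex) \<Rightarrow> complex) \<Rightarrow> bool" where
  "is_check \<mu> k h \<longleftrightarrow> h \<in> borel_measurable \<mu> \<and>
     ((\<lambda>F. \<integral>\<^sup>+ x. ennreal ((cmod (h x - (\<Sum>\<xi>\<in>F. k \<xi> * x \<xi>)))\<^sup>2) \<partial>\<mu>) \<longlongrightarrow> 0)
       (finite_subsets_at_top UNIV)"

definition ess_range :: "'a measure \<Rightarrow> ('a \<Rightarrow> complex) \<Rightarrow> complex set" where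
  "ess_range \<mu> f = {c. \<forall>e>0. emeasure \<mu> {x \<in> space \<mu>. cmod (f x - c) < e} > 0}"

text \<open>l2(X_+), realised as functions on X vanishing off X_+ = {xi. 0 <= xi}.\<close>
definition l2_plus :: "('x::linordered_ab_group_add \<Rightarrow> complex) set" where
  "l2_plus = {g. (\<forall>\<xi>. \<not> 0 \<le> \<xi> \<longrightarrow> g \<xi> = 0) \<and> (\<lambda>\<xi>. (cmod (g \<xi>))\<^sup>2) summable_on UNIV}"

definition l2_norm :: "('x \<Rightarrow> complex) \<Rightarrow> real" where
  "l2_norm g = sqrt (\<Sum>\<^sub>\<infinity>\<xi>. (cmod (g \<xi>))\<^sup>2)"

definition conv :: "('x::ab_group_add \<Rightarrow> complex) \<Rightarrow> ('x \<Rightarrow> complex) \<Rightarrow> 'x \<Rightarrow> complex" where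
  "conv k g \<xi> = (\<Sum>\<^sub>\<infinity>\<eta>. k (\<xi> - \<eta>) * g \<eta>)"

definition W :: "('x::linordered_ab_group_add \<Rightarrow> complex) \<Rightarrow> ('x \<Rightarrow> complex) \<Rightarrow> 'x \<Rightarrow> complex" where
  "W k g = (\<lambda>\<xi>. if 0 \<le> \<xi> then conv k g \<xi> else 0)"

definition spectrum_l2_plus :: "(('x::linordered_ab_group_add \<Rightarrow> complex) \<Rightarrow> ('x \<Rightarrow> complex)) \<Rightarrow> complex set" where
  "spectrum_l2_plus T = {z. \<not> (\<exists>S.
      (\<forall>g\<in>l2_plus. S g \<in> l2_plus) \<and>
      (\<forall>f\<in>l2_plus. \<forall>g\<in>l2_plus. \<forall>a b. S (\<lambda>\<xi>. a * f \<xi> + b * g \<xi>) = (\<lambda>\<xi>. a * S f \<xi> + b * S g \<xi>)) \<and>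
      (\<exists>C. \<forall>g\<in>l2_plus. l2_norm (S g) \<le> C * l2_norm g) \<and>
      (\<forall>g\<in>l2_plus. S (\<lambda>\<xi>. T g \<xi> - z * g \<xi>) = g) \<and>
      (\<forall>g\<in>l2_plus. (\<lambda>\<xi>. T (S g) \<xi> - z * S g \<xi>) = g))}"

end

theory Submission
  imports Defs
begin


fun zmn :: "nat \<Rightarrow> 'a::ab_group_add \<Rightarrow> 'a" where
  "zmn 0 a = 0" | "zmn (Suc n) a = a + zmn n a"

lemma zmn_add: "zmn (m + n) a = zmn m a + zmn n a"
  by (induction m) (auto simp: algebra_simps)

lemma zmn_distrib: "zmn n (a + b) = zmn n a + zmn n b"
  by (induction n) (auto simp: algebra_simps)

lemma zmn_minus: "zmn n (- a) = - zmn n a"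
  by (induction n) (auto simp: algebra_simps)

lemma zmn_diff: "zmn n (a - b) = zmn n a - zmn n b"
  using zmn_distrib[of n a "-b"] zmn_minus[of n b] by simp

lemma zmn_mult: "zmn (m * n) a = zmn m (zmn n a)"
  by (induction m) (auto simp: zmn_add zmn_distrib)

definition zm :: "int \<Rightarrow> 'a::ab_group_add \<Rightarrow> 'a" where
  "zm i a = (if 0 \<le> i then zmn (nat i) a else - zmn (nat (- i)) a)"

lemma zm_diff_nat: "zm (int n - int m) a = zmn n a - zmn m a"
proof (cases "m \<le> n")
  case True
  then have e: "int n - int m = int (n - m)" by simp
  have "n = (n - m) + m" using True by simp
  then have "zmn n a = zmn (n - m) a + zmn m a" by (metis zmn_add)
  then show ?thesis unfolding e zm_def by simp
next
  case False
  then have e: "int n - int m = - int (m - n)" by simp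
  have "m = (m - n) + n" using False by simp
  then have "zmn m a = zmn (m - n) a + zmn n a" by (metis zmn_add)
  moreover have "nat (- (- int (m - n))) = m - n" by simp
  ultimately show ?thesis unfolding e zm_def using False by (simp only:) simp
qed

lemma int_as_diff: obtains n m where "i = int n - int m"
proof -
  have "i = int (nat i) - int (nat (-i))" by (cases "0 \<le> i") auto
  then show ?thesis using that by blast
qed

lemma zm_add: "zm (i + j) a = zm i a + zm j a"
proof -
  obtain n1 m1 where i: "i = int n1 - int m1" by (rule int_as_diff)
  obtain n2 m2 where j: "j = int n2 - int m2" by (rule int_as_diff)
  have "i + j = int (n1 + n2) - int (m1 + m2)" using i j by simp
  then show ?thesis using i j by (simp only: zm_diff_nat zmn_add) (simp add: algebra_simps)
qed

lemma zm_0[simp]: "zm 0 a = 0" by (simp add: zm_def)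
lemma zm_1[simp]: "zm 1 a = a" by (simp add: zm_def)

lemma zm_neg: "zm (- i) a = - zm i a"
  using zm_add[of i "-i" a] by (simp add: eq_neg_iff_add_eq_0 add.commute)

lemma zm_distrib: "zm i (a + b) = zm i a + zm i b"
  by (simp add: zm_def zmn_distrib)

lemma zm_minus_arg: "zm i (- a) = - zm i a"
  by (simp add: zm_def zmn_minus)

lemma zm_mult: "zm (i * j) a = zm i (zm j a)"
proof -
  obtain n1 m1 where i: "i = int n1 - int m1" by (rule int_as_diff)
  obtain n2 m2 where j: "j = int n2 - int m2" by (rule int_as_diff)
  have "i * j = int (n1*n2 + m1*m2) - int (n1*m2 + m1*n2)" unfolding i j by (simp add: algebra_simps)
  then have "zm (i*j) a = zmn (n1*n2 + m1*m2) a - zmn (n1*m2 + m1*n2) a" by (simp only: zm_diff_nat)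
  moreover have "zm i (zm j a) = zmn n1 (zmn n2 a - zmn m2 a) - zmn m1 (zmn n2 a - zmn m2 a)"
    using i j by (simp add: zm_diff_nat)
  ultimately show ?thesis by (simp add: zmn_diff zmn_add zmn_mult[symmetric] algebra_simps) (metis add_right_cancel)
qed

lemma zm_comm: "zm i (zm j a) = zm j (zm i a)"
  by (metis zm_mult mult.commute)

lemma zmn_pos: "(0::'a::linordered_ab_group_add) < a \<Longrightarrow> 0 < n \<Longrightarrow> 0 < zmn n a"
proof (induction n)
  case (Suc n) then show ?case by (cases n) (auto simp: add_pos_pos)
qed simp

lemma zmn_neg: "(a::'a::linordered_ab_group_add) < 0 \<Longrightarrow> 0 < n \<Longrightarrow> zmn n a < 0"
  using zmn_pos[of "-a" n] by (simp add: zmn_minus)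

lemma zm_torsion_free:
  fixes a :: "'a::linordered_ab_group_add"
  assumes "zm i a = 0" "i \<noteq> 0" shows "a = 0"
proof (rule ccontr)
  assume "a \<noteq> 0"
  then have "zmn n a \<noteq> 0" if "0 < n" for n
    using zmn_pos[OF _ that, of a] zmn_neg[OF _ that, of a] by (cases a "0::'a" rule: linorder_cases) auto
  then show False using assms by (auto simp: zm_def split: if_splits)
qed

definition good :: "'a::ab_group_add \<Rightarrow> ('a \<times> real) set \<Rightarrow> bool" where
  "good \<xi> R \<longleftrightarrow> (\<forall>x u v. (x,u) \<in> R \<longrightarrow> (x,v) \<in> R \<longrightarrow> u = v) \<and>
     (\<forall>x y u v. (x,u) \<in> R \<longrightarrow> (y,v) \<in> R \<longrightarrow> (x+y, u+v) \<in> R) \<and>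
     (\<forall>x u. (x,u) \<in> R \<longrightarrow> (-x, -u) \<in> R) \<and> (\<xi>, 1) \<in> R"

lemma good_sv: "good \<xi> R \<Longrightarrow> (x,u) \<in> R \<Longrightarrow> (x,v) \<in> R \<Longrightarrow> u = v"
  unfolding good_def by blast
lemma good_add: "good \<xi> R \<Longrightarrow> (x,u) \<in> R \<Longrightarrow> (y,v) \<in> R \<Longrightarrow> (x+y, u+v) \<in> R"
  unfolding good_def by blast
lemma good_neg: "good \<xi> R \<Longrightarrow> (x,u) \<in> R \<Longrightarrow> (-x, -u) \<in> R"
  unfolding good_def by blast
lemma good_xi: "good \<xi> R \<Longrightarrow> (\<xi>, 1) \<in> R"
  unfolding good_def by blast
lemma good_zero: "good \<xi> R \<Longrightarrow> (0, 0) \<in> R"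
  using good_add[of \<xi> R \<xi> 1 "-\<xi>" "-1"] good_neg[of \<xi> R \<xi> 1] good_xi[of \<xi> R] by simp

lemma good_zm: "good \<xi> R \<Longrightarrow> (x,u) \<in> R \<Longrightarrow> (zm i x, of_int i * u) \<in> R"
proof -
  assume g: "good \<xi> R" and xu: "(x,u) \<in> R"
  have n: "(zmn n x, of_nat n * u) \<in> R" for n
  proof (induction n)
    case 0 then show ?case using good_zero[OF g] by simp
  next
    case (Suc n)
    then have "(x + zmn n x, u + of_nat n * u) \<in> R" using g xu good_add by blast
    then show ?case by (simp add: algebra_simps)
  qed
  show ?thesis
  proof (cases "0 \<le> i")
    case True then show ?thesis using n[of "nat i"] by (simp add: zm_def)
  next
    case False
    then have "(- zmn (nat (-i)) x, - (of_nat (nat (-i)) * u)) \<in> R"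
      using n[of "nat (-i)"] g good_neg by blast
    then show ?thesis using False by (simp add: zm_def)
  qed
qed

lemma good_extend:
  fixes \<xi> :: "'a::linordered_ab_group_add"
  assumes g: "good \<xi> R" and a: "a \<notin> Domain R"
  shows "\<exists>R'. good \<xi> R' \<and> R \<subseteq> R' \<and> R' \<noteq> R"
proof -
  define v where "v = (if \<exists>n. n \<noteq> 0 \<and> zm n a \<in> Domain R
     then (let n = SOME n. n \<noteq> 0 \<and> zm n a \<in> Domain R in (THE u. (zm n a, u) \<in> R) / of_int n) else 0)"
  have sv: "u = w" if "(x,u) \<in> R" "(x,w) \<in> R" for x u w using g that good_sv by blast
  have key: "w = of_int j * v" if "(zm j a, w) \<in> R" for j w
  proof (cases "j = 0")
    case True then show ?thesis using that good_zero[OF g] sv by auto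
  next
    case False
    then have ex: "\<exists>n. n \<noteq> 0 \<and> zm n a \<in> Domain R" using that by blast
    define n where "n = (SOME n. n \<noteq> 0 \<and> zm n a \<in> Domain R)"
    have n: "n \<noteq> 0" "zm n a \<in> Domain R" using someI_ex[OF ex] unfolding n_def by auto
    then obtain f0 where f0: "(zm n a, f0) \<in> R" by blast
    have the: "(THE u. (zm n a, u) \<in> R) = f0" using f0 sv by blast
    have v: "v = f0 / of_int n" using ex unfolding v_def by (simp add: Let_def n_def[symmetric] the)
    have 1: "(zm n (zm j a), of_int n * w) \<in> R" by (rule good_zm[OF g that])
    have 2: "(zm j (zm n a), of_int j * f0) \<in> R" by (rule good_zm[OF g f0])
    have "of_int n * w = of_int j * f0" using sv[OF 1] 2 zm_comm by metis
    then have "w * of_int n = (of_int j * v) * of_int n" using n(1) v by (simp add: field_simps)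
    then show ?thesis using n(1) by simp
  qed
  define R' where "R' = {(x + zm m a, u + of_int m * v) | x u m. (x,u) \<in> R}"
  have "good \<xi> R'"
    unfolding good_def
  proof (intro conjI allI impI)
    fix x u w
    assume "(x,u) \<in> R'" "(x,w) \<in> R'"
    then obtain x1 u1 m1 x2 u2 m2 where 1: "(x1,u1) \<in> R" "x = x1 + zm m1 a" "u = u1 + of_int m1 * v"
      and 2: "(x2,u2) \<in> R" "x = x2 + zm m2 a" "w = u2 + of_int m2 * v" unfolding R'_def by blast
    have "(x1 + - x2, u1 + - u2) \<in> R" using g 1(1) 2(1) good_add good_neg by blast
    moreover have "x1 + - x2 = zm (m2 - m1) a" using 1(2) 2(2)
      by (simp add: zm_add[of m2 "-m1", simplified] zm_neg algebra_simps)
    ultimately have "u1 - u2 = of_int (m2 - m1) * v" using key by (metis diff_conv_add_uminus)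
    then show "u = w" using 1 2 by (simp add: algebra_simps)
  next
    fix x y u w
    assume "(x,u) \<in> R'" "(y,w) \<in> R'"
    then obtain x1 u1 m1 x2 u2 m2 where 1: "(x1,u1) \<in> R" "x = x1 + zm m1 a" "u = u1 + of_int m1 * v"
      and 2: "(x2,u2) \<in> R" "y = x2 + zm m2 a" "w = u2 + of_int m2 * v" unfolding R'_def by blast
    have "(x1 + x2, u1 + u2) \<in> R" using g 1(1) 2(1) good_add good_neg by blast
    moreover have "x + y = (x1 + x2) + zm (m1 + m2) a" using 1 2 by (simp add: zm_add algebra_simps)
    moreover have "u + w = (u1 + u2) + of_int (m1 + m2) * v" using 1 2 by (simp add: algebra_simps)
    ultimately show "(x + y, u + w) \<in> R'" unfolding R'_def by blast
  next
    fix x u assume "(x,u) \<in> R'"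
    then obtain x1 u1 m1 where 1: "(x1,u1) \<in> R" "x = x1 + zm m1 a" "u = u1 + of_int m1 * v"
      unfolding R'_def by blast
    have "(-x1, -u1) \<in> R" using g 1(1) good_neg by blast
    moreover have "-x = -x1 + zm (-m1) a" using 1 by (simp add: zm_neg)
    moreover have "-u = -u1 + of_int (-m1) * v" using 1 by simp
    ultimately show "(-x, -u) \<in> R'" unfolding R'_def by blast
  next
    have "(\<xi>, 1) \<in> R" using g good_xi by blast
    then show "(\<xi>, 1) \<in> R'" unfolding R'_def by force
  qed
  moreover have "R \<subseteq> R'" unfolding R'_def by force
  moreover have "(a, v) \<in> R'" using good_zero[OF g] unfolding R'_def by force
  then have "R' \<noteq> R" using a by blast
  ultimately show ?thesis by blast
qed

lemma good_exists_total:
  fixes \<xi> :: "'a::linordered_ab_group_add"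
  assumes "\<xi> \<noteq> 0"
  shows "\<exists>R. good \<xi> R \<and> Domain R = UNIV"
proof -
  define A where "A = {R. good \<xi> R}"
  define R0 where "R0 = {(zm n \<xi>, of_int n :: real) | n. True}"
  have R0: "good \<xi> R0" unfolding good_def R0_def
  proof (intro conjI allI impI)
    fix x u v assume "(x, u) \<in> {(zm n \<xi>, real_of_int n) |n. True}" "(x, v) \<in> {(zm n \<xi>, real_of_int n) |n. True}"
    then obtain n m where "x = zm n \<xi>" "u = of_int n" "x = zm m \<xi>" "v = of_int m" by blast
    then have "zm (n - m) \<xi> = 0" by (simp add: zm_add[of n "-m", simplified] zm_neg)
    then have "n - m = 0" using zm_torsion_free assms by blast
    then show "u = v" using \<open>u = _\<close> \<open>v = _\<close> by simp
  next
    fix x y u v assume "(x, u) \<in> {(zm n \<xi>, real_of_int n) |n. True}" "(y, v) \<in> {(zm n \<xi>, real_of_int n) |n. True}"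
    then obtain n m where "x = zm n \<xi>" "u = of_int n" "y = zm m \<xi>" "v = of_int m" by auto
    then show "(x + y, u + v) \<in> {(zm n \<xi>, real_of_int n) |n. True}"
      by (intro CollectI exI[of _ "n+m"]) (simp add: zm_add)
  next
    fix x u assume "(x, u) \<in> {(zm n \<xi>, real_of_int n) |n. True}"
    then obtain n where "x = zm n \<xi>" "u = of_int n" by auto
    then show "(-x, -u) \<in> {(zm n \<xi>, real_of_int n) |n. True}"
      by (intro CollectI exI[of _ "-n"]) (simp add: zm_neg)
  next
    show "(\<xi>, 1) \<in> {(zm n \<xi>, real_of_int n) |n. True}"
      by (intro CollectI exI[of _ 1]) simp
  qed
  have "\<forall>C\<in>chains A. \<exists>U\<in>A. \<forall>X\<in>C. X \<subseteq> U"
  proof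
    fix C assume C: "C \<in> chains A"
    show "\<exists>U\<in>A. \<forall>X\<in>C. X \<subseteq> U"
    proof (cases "C = {}")
      case True then show ?thesis using R0 unfolding A_def by blast
    next
      case False
      have CA: "\<And>R. R \<in> C \<Longrightarrow> good \<xi> R" using C unfolding chains_def A_def by blast
      have ch: "\<And>R S. R \<in> C \<Longrightarrow> S \<in> C \<Longrightarrow> R \<subseteq> S \<or> S \<subseteq> R"
        using C unfolding chains_def chain_subset_def by blast
      have "good \<xi> (\<Union>C)" unfolding good_def
      proof (intro conjI allI impI)
        fix x u v assume "(x,u) \<in> \<Union>C" "(x,v) \<in> \<Union>C"
        then obtain R S where "R \<in> C" "S \<in> C" "(x,u) \<in> R" "(x,v) \<in> S" by blast
        then show "u = v" using ch[of R S] CA[of R] CA[of S] good_sv by blast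
      next
        fix x y u v assume "(x,u) \<in> \<Union>C" "(y,v) \<in> \<Union>C"
        then obtain R S where RS: "R \<in> C" "S \<in> C" "(x,u) \<in> R" "(y,v) \<in> S" by blast
        show "(x+y, u+v) \<in> \<Union>C"
        proof (cases "R \<subseteq> S")
          case True then show ?thesis using RS CA[of S] good_add by blast
        next
          case False then have "S \<subseteq> R" using ch RS by blast
          then show ?thesis using RS CA[of R] good_add by blast
        qed
      next
        fix x u assume "(x,u) \<in> \<Union>C"
        then show "(-x, -u) \<in> \<Union>C" using CA good_neg by blast
      next
        show "(\<xi>, 1) \<in> \<Union>C" using False CA good_xi by blast
      qed
      then show ?thesis unfolding A_def by blast
    qed
  qed
  from Zorn_Lemma2[OF this] obtain M where M: "M \<in> A" "\<forall>X\<in>A. M \<subseteq> X \<longrightarrow> X = M" by blast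
  have "Domain M = UNIV"
  proof (rule ccontr)
    assume "Domain M \<noteq> UNIV"
    then obtain a where "a \<notin> Domain M" by blast
    from good_extend[OF _ this] M show False unfolding A_def by blast
  qed
  then show ?thesis using M unfolding A_def by blast
qed

lemma exp_i_ne_1: "exp (\<i> :: complex) \<noteq> 1"
proof
  assume "exp \<i> = 1"
  then obtain n :: int where n: "1 = of_int (2 * n) * pi" by (auto simp: exp_eq_1)
  show False
  proof (cases "n = 0")
    case True then show False using n by simp
  next
    case False
    then have "1 \<le> \<bar>real_of_int (2*n)\<bar>" by linarith
    then have "pi \<le> \<bar>real_of_int (2*n)\<bar> * pi" by simp
    also have "... = 1" using n by (metis abs_mult abs_of_nonneg abs_one pi_ge_zero)
    finally show False using pi_gt3 by simp
  qed
qed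

lemma character_separates:
  fixes \<xi> :: "'x::linordered_ab_group_add"
  assumes "\<xi> \<noteq> 0"
  shows "\<exists>\<gamma>\<in>(dual_group :: ('x \<Rightarrow> complex) set). \<gamma> \<xi> \<noteq> 1"
proof -
  obtain R where R: "good \<xi> R" "Domain R = UNIV" using good_exists_total[OF assms] by blast
  define f where "f x = (THE u. (x,u) \<in> R)" for x
  have sv: "u = w" if "(x,u) \<in> R" "(x,w) \<in> R" for x u w using R(1) that good_sv by blast
  have fR: "(x, f x) \<in> R" for x
  proof -
    obtain u where "(x,u) \<in> R" using R(2) by blast
    then show ?thesis unfolding f_def using sv by (metis theI)
  qed
  have fadd: "f (x + y) = f x + f y" for x y
    using good_add[OF R(1) fR fR] sv fR by blast
  have f\<xi>: "f \<xi> = 1" using good_xi[OF R(1)] sv fR by blast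
  define \<gamma> where "\<gamma> x = exp (\<i> * complex_of_real (f x))" for x
  have "\<gamma> \<in> dual_group" unfolding dual_group_def \<gamma>_def
    by (auto simp: fadd distrib_left exp_add norm_exp_i_times)
  moreover have "\<gamma> \<xi> \<noteq> 1" unfolding \<gamma>_def f\<xi> using exp_i_ne_1 by simp
  ultimately show ?thesis by blast
qed



definition ip :: "'a measure \<Rightarrow> ('a \<Rightarrow> complex) \<Rightarrow> ('a \<Rightarrow> complex) \<Rightarrow> complex" where
  "ip M f g = (LINT \<omega>|M. f \<omega> * cnj (g \<omega>))"

definition nsq :: "'a measure \<Rightarrow> ('a \<Rightarrow> complex) \<Rightarrow> real" where
  "nsq M f = (LINT \<omega>|M. (cmod (f \<omega>))\<^sup>2)"

definition bdd :: "'a measure \<Rightarrow> ('a \<Rightarrow> complex) \<Rightarrow> bool" where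
  "bdd M f \<longleftrightarrow> f \<in> borel_measurable M \<and> (\<exists>B. AE \<omega> in M. cmod (f \<omega>) \<le> B)"

definition tpo :: "'x set \<Rightarrow> ('x \<Rightarrow> complex) \<Rightarrow> ('x \<Rightarrow> complex) \<Rightarrow> complex" where
  "tpo F g \<omega> = (\<Sum>\<xi>\<in>F. g \<xi> * \<omega> \<xi>)"

lemma dual_mult: "\<omega> \<in> dual_group \<Longrightarrow> \<omega> (a + b) = \<omega> a * \<omega> b"
  unfolding dual_group_def by blast
lemma dual_norm: "\<omega> \<in> dual_group \<Longrightarrow> cmod (\<omega> a) = 1"
  unfolding dual_group_def by blast
lemma dual_zero: "\<omega> \<in> dual_group \<Longrightarrow> \<omega> 0 = 1"
proof -
  assume w: "\<omega> \<in> dual_group"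
  have "\<omega> 0 = \<omega> 0 * \<omega> 0" using dual_mult[OF w, of 0 0] by simp
  moreover have "\<omega> 0 \<noteq> 0" using dual_norm[OF w, of 0] by auto
  ultimately show ?thesis by (metis mult_cancel_left2)
qed
lemma dual_inv: "\<omega> \<in> dual_group \<Longrightarrow> \<omega> a * cnj (\<omega> a) = 1"
  using dual_norm[of \<omega> a] by (metis complex_norm_square of_real_1 power_one)
lemma dual_neg: "\<omega> \<in> dual_group \<Longrightarrow> \<omega> (- a) = cnj (\<omega> a)"
proof -
  assume w: "\<omega> \<in> dual_group"
  have "\<omega> a * \<omega> (-a) = 1" using dual_mult[OF w, of a "-a"] dual_zero[OF w] by simp
  then have "cnj (\<omega> a) * (\<omega> a * \<omega> (-a)) = cnj (\<omega> a)" by simp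
  then show ?thesis using dual_inv[OF w, of a] by (simp add: mult.assoc[symmetric] mult.commute)
qed
lemma dual_diff: "\<omega> \<in> dual_group \<Longrightarrow> \<omega> (a - b) = \<omega> a * cnj (\<omega> b)"
  using dual_mult[of \<omega> a "-b"] dual_neg[of \<omega> b] by simp

lemma mult_cnj_sq: "z * cnj z = complex_of_real ((cmod z)\<^sup>2)"
  by (rule complex_norm_square[symmetric])

lemma meas_cnj[measurable]: "f \<in> borel_measurable M \<Longrightarrow> (\<lambda>x. cnj (f x)) \<in> borel_measurable M"
  by (rule measurable_compose[of f M borel cnj])
    (auto intro!: borel_measurable_continuous_onI continuous_intros)

locale haar =
  fixes \<mu> :: "('x::linordered_ab_group_add \<Rightarrow> complex) measure"
  assumes haar: "haar_dual \<mu>"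
begin

sublocale prob_space \<mu> using haar unfolding haar_dual_def by blast

lemma sp: "space \<mu> = dual_group" using haar unfolding haar_dual_def by blast

lemma ech_meas[measurable]: "(\<lambda>\<omega>. \<omega> \<xi>) \<in> borel_measurable \<mu>"
proof (rule measurableI)
  fix A :: "complex set" assume "A \<in> sets borel"
  have "(\<lambda>\<omega>. \<omega> \<xi>) -` A \<inter> space \<mu> = {\<omega> \<in> dual_group. \<omega> \<xi> \<in> A}" using sp by auto
  also have "\<dots> \<in> sets \<mu>" using haar \<open>A \<in> sets borel\<close> unfolding haar_dual_def
    by (auto intro!: sigma_sets.Basic)
  finally show "(\<lambda>\<omega>. \<omega> \<xi>) -` A \<inter> space \<mu> \<in> sets \<mu>" .
qed simp

lemma bdd_integrable: "bdd \<mu> f \<Longrightarrow> integrable \<mu> f"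
  unfolding bdd_def using integrable_const_bound by blast

lemma bdd_meas: "bdd \<mu> f \<Longrightarrow> f \<in> borel_measurable \<mu>" unfolding bdd_def by blast

lemma bddI: "f \<in> borel_measurable \<mu> \<Longrightarrow> (\<And>\<omega>. \<omega> \<in> space \<mu> \<Longrightarrow> cmod (f \<omega>) \<le> B) \<Longrightarrow> bdd \<mu> f"
  unfolding bdd_def by (blast intro: AE_I2)

lemma bdd_ech: "bdd \<mu> (\<lambda>\<omega>. \<omega> \<xi>)"
  by (rule bddI[where B=1]) (auto simp: sp dual_norm)

lemma bdd_const: "bdd \<mu> (\<lambda>\<omega>. c)"
  by (rule bddI[where B="cmod c"]) auto

lemma bdd_bound: assumes "bdd \<mu> f" obtains B where "B \<ge> 0" "AE \<omega> in \<mu>. cmod (f \<omega>) \<le> B"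
proof -
  obtain B where "AE \<omega> in \<mu>. cmod (f \<omega>) \<le> B" using assms unfolding bdd_def by blast
  then have "AE \<omega> in \<mu>. cmod (f \<omega>) \<le> max B 0" by (auto elim: AE_mp)
  then show ?thesis using that[of "max B 0"] by simp
qed

lemma bdd_add: "bdd \<mu> f \<Longrightarrow> bdd \<mu> g \<Longrightarrow> bdd \<mu> (\<lambda>\<omega>. f \<omega> + g \<omega>)"
proof -
  assume f: "bdd \<mu> f" and g: "bdd \<mu> g"
  obtain B1 where "AE \<omega> in \<mu>. cmod (f \<omega>) \<le> B1" using f by (rule bdd_bound)
  moreover obtain B2 where "AE \<omega> in \<mu>. cmod (g \<omega>) \<le> B2" using g by (rule bdd_bound)
  ultimately have "AE \<omega> in \<mu>. cmod (f \<omega> + g \<omega>) \<le> B1 + B2"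
    by eventually_elim (metis add_mono norm_triangle_le)
  then show ?thesis using f g unfolding bdd_def by auto
qed

lemma bdd_mult: "bdd \<mu> f \<Longrightarrow> bdd \<mu> g \<Longrightarrow> bdd \<mu> (\<lambda>\<omega>. f \<omega> * g \<omega>)"
proof -
  assume f: "bdd \<mu> f" and g: "bdd \<mu> g"
  obtain B1 where B1: "B1 \<ge> 0" "AE \<omega> in \<mu>. cmod (f \<omega>) \<le> B1" using f by (rule bdd_bound)
  obtain B2 where B2: "B2 \<ge> 0" "AE \<omega> in \<mu>. cmod (g \<omega>) \<le> B2" using g by (rule bdd_bound)
  have "AE \<omega> in \<mu>. cmod (f \<omega> * g \<omega>) \<le> B1 * B2"
    using B1(2) B2(2) by eventually_elim (simp add: norm_mult mult_mono B1(1))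
  then show ?thesis using f g unfolding bdd_def by auto
qed

lemma bdd_cnj: "bdd \<mu> f \<Longrightarrow> bdd \<mu> (\<lambda>\<omega>. cnj (f \<omega>))"
  unfolding bdd_def by auto

lemma bdd_scale: "bdd \<mu> f \<Longrightarrow> bdd \<mu> (\<lambda>\<omega>. c * f \<omega>)"
  using bdd_mult[OF bdd_const] by blast

lemma bdd_minus: "bdd \<mu> f \<Longrightarrow> bdd \<mu> (\<lambda>\<omega>. - f \<omega>)"
  using bdd_scale[of f "-1"] by simp

lemma bdd_diff: "bdd \<mu> f \<Longrightarrow> bdd \<mu> g \<Longrightarrow> bdd \<mu> (\<lambda>\<omega>. f \<omega> - g \<omega>)"
  using bdd_add[OF _ bdd_minus] by simp

lemma bdd_sum: "finite F \<Longrightarrow> (\<And>i. i \<in> F \<Longrightarrow> bdd \<mu> (f i)) \<Longrightarrow> bdd \<mu> (\<lambda>\<omega>. \<Sum>i\<in>F. f i \<omega>)"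
proof (induction F rule: finite_induct)
  case empty then show ?case using bdd_const[of 0] by simp
next
  case (insert x F) then show ?case using bdd_add[of "f x" "\<lambda>\<omega>. \<Sum>i\<in>F. f i \<omega>"] by simp
qed

lemma bdd_tpo: "finite F \<Longrightarrow> bdd \<mu> (tpo F g)"
  unfolding tpo_def by (intro bdd_sum bdd_scale bdd_ech)

lemma bdd_pow: "bdd \<mu> f \<Longrightarrow> bdd \<mu> (\<lambda>\<omega>. f \<omega> ^ n)"
  by (induction n) (auto intro: bdd_mult bdd_const)

lemma ip_conj: "ip \<mu> g f = cnj (ip \<mu> f g)"
proof -
  have "ip \<mu> g f = (LINT \<omega>|\<mu>. cnj (f \<omega> * cnj (g \<omega>)))" unfolding ip_def by (simp add: mult.commute)
  also have "\<dots> = cnj (ip \<mu> f g)" unfolding ip_def by (rule Bochner_Integration.integral_cnj)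
  finally show ?thesis .
qed

lemma ip_add_left: "bdd \<mu> f \<Longrightarrow> bdd \<mu> f' \<Longrightarrow> bdd \<mu> g \<Longrightarrow>
    ip \<mu> (\<lambda>\<omega>. f \<omega> + f' \<omega>) g = ip \<mu> f g + ip \<mu> f' g"
  unfolding ip_def distrib_right
  by (intro Bochner_Integration.integral_add bdd_integrable bdd_mult bdd_cnj)

lemma ip_scale_left: "ip \<mu> (\<lambda>\<omega>. c * f \<omega>) g = c * ip \<mu> f g"
  unfolding ip_def by (simp add: mult.assoc)

lemma ip_diff_left: "bdd \<mu> f \<Longrightarrow> bdd \<mu> f' \<Longrightarrow> bdd \<mu> g \<Longrightarrow>
    ip \<mu> (\<lambda>\<omega>. f \<omega> - f' \<omega>) g = ip \<mu> f g - ip \<mu> f' g"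
  using ip_add_left[of f "\<lambda>\<omega>. - f' \<omega>" g] ip_scale_left[of "-1" f' g] bdd_minus[of f'] by simp

lemma ip_sum_left: "finite F \<Longrightarrow> (\<And>i. i \<in> F \<Longrightarrow> bdd \<mu> (f i)) \<Longrightarrow> bdd \<mu> g \<Longrightarrow>
    ip \<mu> (\<lambda>\<omega>. \<Sum>i\<in>F. f i \<omega>) g = (\<Sum>i\<in>F. ip \<mu> (f i) g)"
  unfolding ip_def sum_distrib_right
  by (subst Bochner_Integration.integral_sum) (auto intro!: bdd_integrable bdd_mult bdd_cnj)

lemma ip_add_right: "bdd \<mu> f \<Longrightarrow> bdd \<mu> g \<Longrightarrow> bdd \<mu> g' \<Longrightarrow>
    ip \<mu> f (\<lambda>\<omega>. g \<omega> + g' \<omega>) = ip \<mu> f g + ip \<mu> f g'"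
  using ip_add_left[of g g' f] by (simp add: ip_conj[of f])

lemma ip_scale_right: "ip \<mu> f (\<lambda>\<omega>. c * g \<omega>) = cnj c * ip \<mu> f g"
  using ip_scale_left[of c g f] by (simp add: ip_conj[of f])

lemma ip_diff_right: "bdd \<mu> f \<Longrightarrow> bdd \<mu> g \<Longrightarrow> bdd \<mu> g' \<Longrightarrow>
    ip \<mu> f (\<lambda>\<omega>. g \<omega> - g' \<omega>) = ip \<mu> f g - ip \<mu> f g'"
  using ip_diff_left[of g g' f] by (simp add: ip_conj[of f])

lemma ip_sum_right: "finite F \<Longrightarrow> (\<And>i. i \<in> F \<Longrightarrow> bdd \<mu> (g i)) \<Longrightarrow> bdd \<mu> f \<Longrightarrow>
    ip \<mu> f (\<lambda>\<omega>. \<Sum>i\<in>F. g i \<omega>) = (\<Sum>i\<in>F. ip \<mu> f (g i))"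
  using ip_sum_left[of F g f] by (simp add: ip_conj[of f])

lemma ip_self: "ip \<mu> f f = complex_of_real (nsq \<mu> f)"
  unfolding ip_def nsq_def mult_cnj_sq by (rule integral_complex_of_real)

lemma nsq_nonneg: "0 \<le> nsq \<mu> f"
  unfolding nsq_def by simp

lemma int_ech: "(LINT \<omega>|\<mu>. \<omega> \<xi>) = (if \<xi> = 0 then 1 else 0)"
proof (cases "\<xi> = 0")
  case True
  have "(LINT \<omega>|\<mu>. \<omega> \<xi>) = (LINT \<omega>|\<mu>. 1)"
    by (rule Bochner_Integration.integral_cong) (auto simp: sp True dual_zero)
  then show ?thesis using True by (simp add: prob_space)
next
  case False
  obtain \<gamma> where \<gamma>: "\<gamma> \<in> dual_group" "\<gamma> \<xi> \<noteq> 1" using character_separates[OF False] by blast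
  define T where "T = (\<lambda>(\<omega>::'x\<Rightarrow>complex) \<xi>. \<gamma> \<xi> * \<omega> \<xi>)"
  have T: "T \<in> \<mu> \<rightarrow>\<^sub>M \<mu>" "distr \<mu> \<mu> T = \<mu>" using haar \<gamma>(1) unfolding haar_dual_def T_def by blast+
  have "(LINT \<omega>|\<mu>. \<omega> \<xi>) = (LINT \<omega>|distr \<mu> \<mu> T. \<omega> \<xi>)" using T(2) by simp
  also have "\<dots> = (LINT \<omega>|\<mu>. T \<omega> \<xi>)" by (rule integral_distr[OF T(1)]) simp
  also have "\<dots> = \<gamma> \<xi> * (LINT \<omega>|\<mu>. \<omega> \<xi>)" unfolding T_def by simp
  finally have "(1 - \<gamma> \<xi>) * (LINT \<omega>|\<mu>. \<omega> \<xi>) = 0" by (simp add: algebra_simps)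
  then show ?thesis using \<gamma>(2) False by simp
qed

lemma orth: "ip \<mu> (\<lambda>\<omega>. \<omega> \<xi>) (\<lambda>\<omega>. \<omega> \<eta>) = (if \<xi> = \<eta> then 1 else 0)"
proof -
  have "ip \<mu> (\<lambda>\<omega>. \<omega> \<xi>) (\<lambda>\<omega>. \<omega> \<eta>) = (LINT \<omega>|\<mu>. \<omega> (\<xi> - \<eta>))"
    unfolding ip_def by (rule Bochner_Integration.integral_cong) (auto simp: sp dual_diff)
  then show ?thesis by (simp add: int_ech)
qed

lemma cnj_mult_sq: "cnj z * z = complex_of_real ((cmod z)\<^sup>2)"
  by (metis mult.commute mult_cnj_sq)

lemma bdd_term: "bdd \<mu> (\<lambda>\<omega>. c * \<omega> \<xi>)"
  by (rule bdd_scale[OF bdd_ech])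

lemma coef_tpo: "finite F \<Longrightarrow> ip \<mu> (tpo F g) (\<lambda>\<omega>. \<omega> \<xi>) = (if \<xi> \<in> F then g \<xi> else 0)"
  unfolding tpo_def
  by (subst ip_sum_left) (auto intro!: bdd_scale bdd_ech simp: ip_scale_left orth if_distrib cong: if_cong)

lemma nsq_tpo: "finite F \<Longrightarrow> nsq \<mu> (tpo F g) = (\<Sum>\<xi>\<in>F. (cmod (g \<xi>))\<^sup>2)"
proof -
  assume F: "finite F"
  have "ip \<mu> (tpo F g) (tpo F g) = (\<Sum>\<xi>\<in>F. ip \<mu> (tpo F g) (\<lambda>\<omega>. g \<xi> * \<omega> \<xi>))"
    unfolding tpo_def[of F g] using F bdd_tpo[OF F, of g] unfolding tpo_def
    by (intro ip_sum_right) (auto intro: bdd_term)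
  also have "\<dots> = (\<Sum>\<xi>\<in>F. cnj (g \<xi>) * g \<xi>)"
    using F by (intro sum.cong) (auto simp: coef_tpo ip_scale_right)
  also have "\<dots> = (\<Sum>\<xi>\<in>F. complex_of_real ((cmod (g \<xi>))\<^sup>2))"
    by (simp only: cnj_mult_sq)
  also have "\<dots> = complex_of_real (\<Sum>\<xi>\<in>F. (cmod (g \<xi>))\<^sup>2)"
    by (rule of_real_sum[symmetric])
  finally show ?thesis unfolding ip_self by (rule of_real_eq_iff[THEN iffD1])
qed

lemma bessel:
  assumes f: "bdd \<mu> f" and F: "finite F"
  shows "(\<Sum>\<xi>\<in>F. (cmod (ip \<mu> f (\<lambda>\<omega>. \<omega> \<xi>)))\<^sup>2) \<le> nsq \<mu> f"
proof -
  define c where "c \<xi> = ip \<mu> f (\<lambda>\<omega>. \<omega> \<xi>)" for \<xi>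
  define p where "p = tpo F c"
  have p: "bdd \<mu> p" unfolding p_def using F by (rule bdd_tpo)
  define Sr where "Sr = (\<Sum>\<xi>\<in>F. (cmod (c \<xi>))\<^sup>2)"
  define S where "S = complex_of_real Sr"
  have "ip \<mu> f p = (\<Sum>\<xi>\<in>F. ip \<mu> f (\<lambda>\<omega>. c \<xi> * \<omega> \<xi>))"
    unfolding p_def tpo_def using F f by (intro ip_sum_right) (auto intro: bdd_term)
  also have "\<dots> = (\<Sum>\<xi>\<in>F. cnj (c \<xi>) * c \<xi>)"
    by (intro sum.cong) (auto simp: ip_scale_right c_def)
  also have "\<dots> = (\<Sum>\<xi>\<in>F. complex_of_real ((cmod (c \<xi>))\<^sup>2))" by (simp only: cnj_mult_sq)
  also have "\<dots> = S" unfolding S_def Sr_def by (rule of_real_sum[symmetric])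
  finally have fp: "ip \<mu> f p = S" .
  have pp: "ip \<mu> p p = S"
    unfolding ip_self p_def nsq_tpo[OF F] S_def Sr_def ..
  have pf: "ip \<mu> p f = S" using fp ip_conj[of p f] unfolding S_def by simp
  have "ip \<mu> (\<lambda>\<omega>. f \<omega> - p \<omega>) (\<lambda>\<omega>. f \<omega> - p \<omega>) = ip \<mu> f f - ip \<mu> f p - (ip \<mu> p f - ip \<mu> p p)"
    using f p bdd_diff[OF f p] by (simp add: ip_diff_left ip_diff_right)
  also have "\<dots> = ip \<mu> f f - S" using fp pp pf by simp
  finally have "complex_of_real (nsq \<mu> (\<lambda>\<omega>. f \<omega> - p \<omega>)) = complex_of_real (nsq \<mu> f - Sr)"
    unfolding ip_self S_def of_real_diff .
  then have "nsq \<mu> (\<lambda>\<omega>. f \<omega> - p \<omega>) = nsq \<mu> f - Sr"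
    by (rule of_real_eq_iff[THEN iffD1])
  then show ?thesis using nsq_nonneg[of "\<lambda>\<omega>. f \<omega> - p \<omega>"] unfolding Sr_def c_def by simp
qed

end


definition l2 :: "('x \<Rightarrow> complex) \<Rightarrow> bool" where
  "l2 g \<longleftrightarrow> (\<lambda>\<xi>. (cmod (g \<xi>))\<^sup>2) summable_on UNIV"

lemma norm_summable_complex: "(\<lambda>x. cmod (f x)) summable_on A \<Longrightarrow> f summable_on A"
  by (rule abs_summable_summable)

lemma l2_sum_le: "l2 g \<Longrightarrow> finite F \<Longrightarrow> (\<Sum>\<xi>\<in>F. (cmod (g \<xi>))\<^sup>2) \<le> (\<Sum>\<^sub>\<infinity>\<xi>. (cmod (g \<xi>))\<^sup>2)"
  unfolding l2_def by (rule finite_sum_le_infsum) auto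

lemma l2I_bound:
  assumes "\<And>F. finite F \<Longrightarrow> (\<Sum>\<xi>\<in>F. (cmod (g \<xi>))\<^sup>2) \<le> B"
  shows "l2 g" "(\<Sum>\<^sub>\<infinity>\<xi>. (cmod (g \<xi>))\<^sup>2) \<le> B"
proof -
  show l: "l2 g" unfolding l2_def
    by (rule nonneg_bdd_above_summable_on) (auto intro!: bdd_aboveI[where M=B] assms)
  show "(\<Sum>\<^sub>\<infinity>\<xi>. (cmod (g \<xi>))\<^sup>2) \<le> B"
    by (rule infsum_le_finite_sums) (use l assms in \<open>auto simp: l2_def\<close>)
qed

lemma l2_infsum_nonneg: "0 \<le> (\<Sum>\<^sub>\<infinity>\<xi>. (cmod (g \<xi>))\<^sup>2)"
  by (rule infsum_nonneg) auto

lemma l2_norm_sq: "(l2_norm g)\<^sup>2 = (\<Sum>\<^sub>\<infinity>\<xi>. (cmod (g \<xi>))\<^sup>2)"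
  unfolding l2_norm_def using l2_infsum_nonneg by simp

lemma l2_norm_nonneg: "0 \<le> l2_norm g" unfolding l2_norm_def using l2_infsum_nonneg by simp

lemma l2_pt: "l2 g \<Longrightarrow> cmod (g \<xi>) \<le> l2_norm g"
proof -
  assume "l2 g"
  then have "(cmod (g \<xi>))\<^sup>2 \<le> (\<Sum>\<^sub>\<infinity>\<xi>. (cmod (g \<xi>))\<^sup>2)" using l2_sum_le[of g "{\<xi>}"] by simp
  then show ?thesis unfolding l2_norm_def by (simp add: real_le_rsqrt)
qed

lemma l2_norm_le: "(\<And>F. finite F \<Longrightarrow> (\<Sum>\<xi>\<in>F. (cmod (g \<xi>))\<^sup>2) \<le> B\<^sup>2) \<Longrightarrow> 0 \<le> B \<Longrightarrow> l2_norm g \<le> B"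
proof -
  assume a: "\<And>F. finite F \<Longrightarrow> (\<Sum>\<xi>\<in>F. (cmod (g \<xi>))\<^sup>2) \<le> B\<^sup>2" and B: "0 \<le> B"
  have "(\<Sum>\<^sub>\<infinity>\<xi>. (cmod (g \<xi>))\<^sup>2) \<le> B\<^sup>2" using l2I_bound(2)[of g "B\<^sup>2"] a by blast
  then have "sqrt (\<Sum>\<^sub>\<infinity>\<xi>. (cmod (g \<xi>))\<^sup>2) \<le> sqrt (B\<^sup>2)" by (rule real_sqrt_le_mono)
  then show ?thesis unfolding l2_norm_def using B by simp
qed

lemma sq_add_le: "(cmod (a + b))\<^sup>2 \<le> 2 * (cmod a)\<^sup>2 + 2 * (cmod b)\<^sup>2"
proof -
  have "cmod (a + b) \<le> cmod a + cmod b" by (rule norm_triangle_ineq)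
  then have "(cmod (a + b))\<^sup>2 \<le> (cmod a + cmod b)\<^sup>2" by (simp add: power_mono)
  also have "\<dots> \<le> 2 * (cmod a)\<^sup>2 + 2 * (cmod b)\<^sup>2"
  proof -
    have "0 \<le> (cmod a - cmod b)\<^sup>2" by simp
    then show ?thesis by (simp add: power2_eq_square algebra_simps)
  qed
  finally show ?thesis .
qed

lemma l2_lin: "l2 f \<Longrightarrow> l2 g \<Longrightarrow> l2 (\<lambda>\<xi>. a * f \<xi> + b * g \<xi>)"
  unfolding l2_def
proof (rule summable_on_comparison_test)
  assume f: "(\<lambda>\<xi>. (cmod (f \<xi>))\<^sup>2) summable_on UNIV" and g: "(\<lambda>\<xi>. (cmod (g \<xi>))\<^sup>2) summable_on UNIV"
  show "(\<lambda>\<xi>. 2 * (cmod a)\<^sup>2 * (cmod (f \<xi>))\<^sup>2 + 2 * (cmod b)\<^sup>2 * (cmod (g \<xi>))\<^sup>2) summable_on UNIV"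
    by (intro summable_on_add summable_on_cmult_right f g)
  fix x
  show "(cmod (a * f x + b * g x))\<^sup>2 \<le> 2 * (cmod a)\<^sup>2 * (cmod (f x))\<^sup>2 + 2 * (cmod b)\<^sup>2 * (cmod (g x))\<^sup>2"
    using sq_add_le[of "a * f x" "b * g x"] by (simp add: norm_mult power_mult_distrib)
qed simp

lemma l2_zero: "l2 (\<lambda>_. 0)" unfolding l2_def by simp

lemma prod_summable:
  assumes "l2 f" "l2 g" shows "(\<lambda>\<eta>. f \<eta> * g \<eta>) summable_on UNIV"
proof (rule norm_summable_complex, rule summable_on_comparison_test)
  show "(\<lambda>\<eta>. (cmod (f \<eta>))\<^sup>2 + (cmod (g \<eta>))\<^sup>2) summable_on UNIV"
    using assms unfolding l2_def by (intro summable_on_add)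
  fix x
  have "0 \<le> (cmod (f x) - cmod (g x))\<^sup>2" by simp
  then have "2 * (cmod (f x) * cmod (g x)) \<le> (cmod (f x))\<^sup>2 + (cmod (g x))\<^sup>2"
    by (simp add: power2_eq_square algebra_simps)
  moreover have "0 \<le> cmod (f x) * cmod (g x)" by simp
  ultimately show "cmod (f x * g x) \<le> (cmod (f x))\<^sup>2 + (cmod (g x))\<^sup>2"
    unfolding norm_mult by linarith
qed simp

lemma l2_reflect: fixes c :: "'x::ab_group_add \<Rightarrow> complex" shows "l2 c \<Longrightarrow> l2 (\<lambda>\<eta>. c (\<xi> - \<eta>))"
proof -
  have "(\<lambda>\<eta>. (cmod (c (\<xi> - \<eta>)))\<^sup>2) summable_on UNIV \<longleftrightarrow> (\<lambda>\<eta>. (cmod (c \<eta>))\<^sup>2) summable_on UNIV"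
    by (rule summable_on_reindex_bij_witness[where i="\<lambda>\<eta>. \<xi> - \<eta>" and j="\<lambda>\<eta>. \<xi> - \<eta>"]) simp_all
  then show "l2 c \<Longrightarrow> l2 (\<lambda>\<eta>. c (\<xi> - \<eta>))" unfolding l2_def by simp
qed

lemma conv_summ: fixes c :: "'x::ab_group_add \<Rightarrow> complex" shows "l2 c \<Longrightarrow> l2 g \<Longrightarrow> (\<lambda>\<eta>. c (\<xi> - \<eta>) * g \<eta>) summable_on UNIV"
  by (rule prod_summable[OF l2_reflect])

lemma conv_lin2:
  assumes "l2 c" "l2 f" "l2 g"
  shows "conv c (\<lambda>\<xi>. a * f \<xi> + b * g \<xi>) \<xi> = a * conv c f \<xi> + b * conv c g \<xi>"
proof -
  have "conv c (\<lambda>\<xi>. a * f \<xi> + b * g \<xi>) \<xi> = (\<Sum>\<^sub>\<infinity>\<eta>. a * (c (\<xi> - \<eta>) * f \<eta>) + b * (c (\<xi> - \<eta>) * g \<eta>))"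
    unfolding conv_def by (simp add: algebra_simps)
  also have "\<dots> = (\<Sum>\<^sub>\<infinity>\<eta>. a * (c (\<xi> - \<eta>) * f \<eta>)) + (\<Sum>\<^sub>\<infinity>\<eta>. b * (c (\<xi> - \<eta>) * g \<eta>))"
    by (intro infsum_add summable_on_cmult_right conv_summ assms)
  also have "\<dots> = a * conv c f \<xi> + b * conv c g \<xi>"
    unfolding conv_def by (simp add: infsum_cmult_right conv_summ assms)
  finally show ?thesis .
qed

lemma conv_lin1:
  assumes "l2 c" "l2 d" "l2 g"
  shows "conv (\<lambda>\<zeta>. a * c \<zeta> + b * d \<zeta>) g \<xi> = a * conv c g \<xi> + b * conv d g \<xi>"
proof -
  have "conv (\<lambda>\<zeta>. a * c \<zeta> + b * d \<zeta>) g \<xi> = (\<Sum>\<^sub>\<infinity>\<eta>. a * (c (\<xi> - \<eta>) * g \<eta>) + b * (d (\<xi> - \<eta>) * g \<eta>))"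
    unfolding conv_def by (simp add: algebra_simps)
  also have "\<dots> = (\<Sum>\<^sub>\<infinity>\<eta>. a * (c (\<xi> - \<eta>) * g \<eta>)) + (\<Sum>\<^sub>\<infinity>\<eta>. b * (d (\<xi> - \<eta>) * g \<eta>))"
    by (intro infsum_add summable_on_cmult_right conv_summ assms)
  also have "\<dots> = a * conv c g \<xi> + b * conv d g \<xi>"
    unfolding conv_def by (simp add: infsum_cmult_right conv_summ assms)
  finally show ?thesis .
qed

lemma conv_fin:
  assumes "finite F" "\<And>\<eta>. \<eta> \<notin> F \<Longrightarrow> g \<eta> = 0"
  shows "conv c g \<xi> = (\<Sum>\<eta>\<in>F. c (\<xi> - \<eta>) * g \<eta>)"
proof -
  have "conv c g \<xi> = infsum (\<lambda>\<eta>. c (\<xi> - \<eta>) * g \<eta>) F"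
    unfolding conv_def by (rule infsum_cong_neutral) (use assms in auto)
  then show ?thesis using assms(1) by simp
qed

lemma conv_delta: "conv (\<lambda>\<zeta>. if \<zeta> = 0 then 1 else 0) g \<xi> = g \<xi>"
proof -
  have "conv (\<lambda>\<zeta>. if \<zeta> = 0 then 1 else 0) g \<xi> = infsum (\<lambda>\<eta>. (if \<xi> - \<eta> = 0 then 1 else 0) * g \<eta>) {\<xi>}"
    unfolding conv_def by (rule infsum_cong_neutral) auto
  then show ?thesis by simp
qed

lemma l2_delta: "l2 (\<lambda>\<zeta>. if \<zeta> = 0 then 1 else 0)"
proof (rule l2I_bound(1)[where B=1])
  fix F :: "'a set" assume "finite F"
  have "(\<Sum>\<xi>\<in>F. (cmod (if \<xi> = 0 then 1 else 0::complex))\<^sup>2) = (\<Sum>\<xi>\<in>F. if \<xi> = 0 then 1 else 0)"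
    by (intro sum.cong) auto
  also have "\<dots> = (if 0 \<in> F then 1 else 0)" using \<open>finite F\<close> by (simp add: sum.delta)
  finally show "(\<Sum>\<xi>\<in>F. (cmod (if \<xi> = 0 then 1 else 0::complex))\<^sup>2) \<le> 1" by simp
qed

lemma conv_tends:
  assumes "l2 c" "l2 g"
  shows "((\<lambda>G. \<Sum>\<eta>\<in>G. c (\<xi> - \<eta>) * g \<eta>) \<longlongrightarrow> conv c g \<xi>) (finite_subsets_at_top UNIV)"
  using conv_summ[OF assms, of \<xi>] unfolding conv_def summable_iff_has_sum_infsum has_sum_def .

context haar
begin

definition coef :: "(('x \<Rightarrow> complex) \<Rightarrow> complex) \<Rightarrow> 'x \<Rightarrow> complex" where
  "coef f \<xi> = ip \<mu> f (\<lambda>\<omega>. \<omega> \<xi>)"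

lemma coef_l2: "bdd \<mu> f \<Longrightarrow> l2 (coef f)"
  using l2I_bound(1)[of "coef f" "nsq \<mu> f"] bessel unfolding coef_def by blast

lemma coef_mult_char: "ip \<mu> (\<lambda>\<omega>. f \<omega> * \<omega> \<eta>) (\<lambda>\<omega>. \<omega> \<xi>) = coef f (\<xi> - \<eta>)"
  unfolding coef_def ip_def
  by (rule Bochner_Integration.integral_cong) (auto simp: sp dual_diff dual_inv mult.assoc)

lemma coef_mult_tpo:
  assumes f: "bdd \<mu> f" and F: "finite F"
  shows "ip \<mu> (\<lambda>\<omega>. f \<omega> * tpo F g \<omega>) (\<lambda>\<omega>. \<omega> \<xi>) = (\<Sum>\<eta>\<in>F. coef f (\<xi> - \<eta>) * g \<eta>)"
proof -
  have "(\<lambda>\<omega>. f \<omega> * tpo F g \<omega>) = (\<lambda>\<omega>. \<Sum>\<eta>\<in>F. g \<eta> * (f \<omega> * \<omega> \<eta>))"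
    unfolding tpo_def by (auto simp: sum_distrib_left algebra_simps)
  then have "ip \<mu> (\<lambda>\<omega>. f \<omega> * tpo F g \<omega>) (\<lambda>\<omega>. \<omega> \<xi>) = (\<Sum>\<eta>\<in>F. ip \<mu> (\<lambda>\<omega>. g \<eta> * (f \<omega> * \<omega> \<eta>)) (\<lambda>\<omega>. \<omega> \<xi>))"
    using F f by (simp add: ip_sum_left bdd_scale bdd_mult bdd_ech)
  also have "\<dots> = (\<Sum>\<eta>\<in>F. coef f (\<xi> - \<eta>) * g \<eta>)"
    by (intro sum.cong refl) (subst ip_scale_left, subst coef_mult_char, rule mult.commute)
  finally show ?thesis .
qed

lemma nsq_integrable: "bdd \<mu> f \<Longrightarrow> integrable \<mu> (\<lambda>\<omega>. (cmod (f \<omega>))\<^sup>2)"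
proof -
  assume f: "bdd \<mu> f"
  obtain B where B: "B \<ge> 0" "AE \<omega> in \<mu>. cmod (f \<omega>) \<le> B" using f by (rule bdd_bound)
  have "AE \<omega> in \<mu>. norm ((cmod (f \<omega>))\<^sup>2) \<le> B\<^sup>2"
    using B(2) by eventually_elim (simp add: power_mono)
  then show ?thesis using f unfolding bdd_def by (intro integrable_const_bound) auto
qed

lemma nsq_mult_le:
  assumes f: "bdd \<mu> f" and \<phi>: "bdd \<mu> \<phi>" and M: "AE \<omega> in \<mu>. cmod (\<phi> \<omega>) \<le> M"
  shows "nsq \<mu> (\<lambda>\<omega>. \<phi> \<omega> * f \<omega>) \<le> M\<^sup>2 * nsq \<mu> f"
proof -
  have "nsq \<mu> (\<lambda>\<omega>. \<phi> \<omega> * f \<omega>) \<le> (LINT \<omega>|\<mu>. M\<^sup>2 * (cmod (f \<omega>))\<^sup>2)"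
    unfolding nsq_def
  proof (rule integral_mono_AE)
    show "integrable \<mu> (\<lambda>\<omega>. (cmod (\<phi> \<omega> * f \<omega>))\<^sup>2)" by (intro nsq_integrable bdd_mult \<phi> f)
    show "integrable \<mu> (\<lambda>\<omega>. M\<^sup>2 * (cmod (f \<omega>))\<^sup>2)" by (intro integrable_mult_right nsq_integrable f)
    show "AE \<omega> in \<mu>. (cmod (\<phi> \<omega> * f \<omega>))\<^sup>2 \<le> M\<^sup>2 * (cmod (f \<omega>))\<^sup>2"
      using M by eventually_elim (simp add: norm_mult power_mult_distrib mult_right_mono power_mono)
  qed
  then show ?thesis unfolding nsq_def by simp
qed

lemma bnd_fin:
  assumes \<phi>: "bdd \<mu> \<phi>" and M: "AE \<omega> in \<mu>. cmod (\<phi> \<omega>) \<le> M" and F: "finite F" and G: "finite G"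
  shows "(\<Sum>\<xi>\<in>F. (cmod (\<Sum>\<eta>\<in>G. coef \<phi> (\<xi> - \<eta>) * g \<eta>))\<^sup>2) \<le> M\<^sup>2 * (\<Sum>\<eta>\<in>G. (cmod (g \<eta>))\<^sup>2)"
proof -
  have "(\<Sum>\<xi>\<in>F. (cmod (\<Sum>\<eta>\<in>G. coef \<phi> (\<xi> - \<eta>) * g \<eta>))\<^sup>2)
      = (\<Sum>\<xi>\<in>F. (cmod (ip \<mu> (\<lambda>\<omega>. \<phi> \<omega> * tpo G g \<omega>) (\<lambda>\<omega>. \<omega> \<xi>)))\<^sup>2)"
    by (simp add: coef_mult_tpo[OF \<phi> G])
  also have "\<dots> \<le> nsq \<mu> (\<lambda>\<omega>. \<phi> \<omega> * tpo G g \<omega>)"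
    by (rule bessel[OF bdd_mult[OF \<phi> bdd_tpo[OF G]] F])
  also have "\<dots> \<le> M\<^sup>2 * nsq \<mu> (tpo G g)"
    by (rule nsq_mult_le[OF bdd_tpo[OF G] \<phi> M])
  finally show ?thesis by (simp add: nsq_tpo[OF G])
qed

lemma bnd:
  assumes \<phi>: "bdd \<mu> \<phi>" and M: "AE \<omega> in \<mu>. cmod (\<phi> \<omega>) \<le> M" and g: "l2 g" and F: "finite F"
  shows "(\<Sum>\<xi>\<in>F. (cmod (conv (coef \<phi>) g \<xi>))\<^sup>2) \<le> M\<^sup>2 * (\<Sum>\<^sub>\<infinity>\<eta>. (cmod (g \<eta>))\<^sup>2)"
proof (rule tendsto_le[OF finite_subsets_at_top_neq_bot])
  show "((\<lambda>G. \<Sum>\<xi>\<in>F. (cmod (\<Sum>\<eta>\<in>G. coef \<phi> (\<xi> - \<eta>) * g \<eta>))\<^sup>2) \<longlongrightarrow> (\<Sum>\<xi>\<in>F. (cmod (conv (coef \<phi>) g \<xi>))\<^sup>2))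
      (finite_subsets_at_top UNIV)"
    by (intro tendsto_sum tendsto_power tendsto_norm conv_tends coef_l2 \<phi> g)
  show "((\<lambda>G. M\<^sup>2 * (\<Sum>\<^sub>\<infinity>\<eta>. (cmod (g \<eta>))\<^sup>2)) \<longlongrightarrow> M\<^sup>2 * (\<Sum>\<^sub>\<infinity>\<eta>. (cmod (g \<eta>))\<^sup>2)) (finite_subsets_at_top UNIV)"
    by simp
  show "\<forall>\<^sub>F G in finite_subsets_at_top UNIV. (\<Sum>\<xi>\<in>F. (cmod (\<Sum>\<eta>\<in>G. coef \<phi> (\<xi> - \<eta>) * g \<eta>))\<^sup>2)
      \<le> M\<^sup>2 * (\<Sum>\<^sub>\<infinity>\<eta>. (cmod (g \<eta>))\<^sup>2)"
  proof (rule eventually_finite_subsets_at_top_weakI)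
    fix G :: "'x set" assume G: "finite G" "G \<subseteq> UNIV"
    have "(\<Sum>\<xi>\<in>F. (cmod (\<Sum>\<eta>\<in>G. coef \<phi> (\<xi> - \<eta>) * g \<eta>))\<^sup>2) \<le> M\<^sup>2 * (\<Sum>\<eta>\<in>G. (cmod (g \<eta>))\<^sup>2)"
      by (rule bnd_fin[OF \<phi> M F G(1)])
    also have "\<dots> \<le> M\<^sup>2 * (\<Sum>\<^sub>\<infinity>\<eta>. (cmod (g \<eta>))\<^sup>2)"
      by (intro mult_left_mono l2_sum_le g G(1)) simp
    finally show "(\<Sum>\<xi>\<in>F. (cmod (\<Sum>\<eta>\<in>G. coef \<phi> (\<xi> - \<eta>) * g \<eta>))\<^sup>2) \<le> M\<^sup>2 * (\<Sum>\<^sub>\<infinity>\<eta>. (cmod (g \<eta>))\<^sup>2)" .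
  qed
qed

lemma toeplitz_bound:
  assumes \<phi>: "bdd \<mu> \<phi>" and M: "AE \<omega> in \<mu>. cmod (\<phi> \<omega>) \<le> M" and M0: "0 \<le> M" and g: "l2 g"
  defines "Tg \<equiv> (\<lambda>\<xi>. if 0 \<le> \<xi> then conv (coef \<phi>) g \<xi> else 0)"
  shows "l2 Tg" "l2_norm Tg \<le> M * l2_norm g"
proof -
  have fin: "(\<Sum>\<xi>\<in>F. (cmod (Tg \<xi>))\<^sup>2) \<le> (M * l2_norm g)\<^sup>2" if F: "finite F" for F
  proof -
    have "(\<Sum>\<xi>\<in>F. (cmod (Tg \<xi>))\<^sup>2) \<le> (\<Sum>\<xi>\<in>F. (cmod (conv (coef \<phi>) g \<xi>))\<^sup>2)"
      unfolding Tg_def by (intro sum_mono) auto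
    also have "\<dots> \<le> M\<^sup>2 * (\<Sum>\<^sub>\<infinity>\<eta>. (cmod (g \<eta>))\<^sup>2)" by (rule bnd[OF \<phi> M g F])
    also have "\<dots> = (M * l2_norm g)\<^sup>2" by (simp add: power_mult_distrib l2_norm_sq)
    finally show ?thesis .
  qed
  show "l2 Tg" using l2I_bound(1)[OF fin] .
  show "l2_norm Tg \<le> M * l2_norm g" using fin by (intro l2_norm_le) (auto simp: M0 l2_norm_nonneg)
qed

end


lemma l2_plus_iff: "g \<in> l2_plus \<longleftrightarrow> (\<forall>\<xi>. \<not> 0 \<le> \<xi> \<longrightarrow> g \<xi> = 0) \<and> l2 g"
  unfolding l2_plus_def l2_def by blast

lemma l2_plus_lin: "f \<in> l2_plus \<Longrightarrow> g \<in> l2_plus \<Longrightarrow> (\<lambda>\<xi>. a * f \<xi> + b * g \<xi>) \<in> l2_plus"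
  unfolding l2_plus_iff using l2_lin by auto

lemma l2_plus_zero: "(\<lambda>_. 0) \<in> l2_plus"
  unfolding l2_plus_iff using l2_zero by auto

lemma l2_plus_sum: "finite A \<Longrightarrow> (\<And>n. n \<in> A \<Longrightarrow> f n \<in> l2_plus) \<Longrightarrow> (\<lambda>\<xi>. \<Sum>n\<in>A. f n \<xi>) \<in> l2_plus"
proof (induction A rule: finite_induct)
  case empty then show ?case using l2_plus_zero by simp
next
  case (insert x F)
  then show ?case using l2_plus_lin[of "f x" "\<lambda>\<xi>. \<Sum>n\<in>F. f n \<xi>" 1 1] by simp
qed

lemma L2_set_le_l2_norm: "l2 g \<Longrightarrow> finite F \<Longrightarrow> L2_set (\<lambda>\<xi>. cmod (g \<xi>)) F \<le> l2_norm g"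
  unfolding L2_set_def l2_norm_def by (intro real_sqrt_le_mono l2_sum_le)

lemma l2_from_L2_set:
  assumes "\<And>F. finite F \<Longrightarrow> L2_set (\<lambda>\<xi>. cmod (g \<xi>)) F \<le> B" "0 \<le> B"
  shows "l2 g" "l2_norm g \<le> B"
proof -
  have fin: "(\<Sum>\<xi>\<in>F. (cmod (g \<xi>))\<^sup>2) \<le> B\<^sup>2" if "finite F" for F
  proof -
    have "sqrt (\<Sum>\<xi>\<in>F. (cmod (g \<xi>))\<^sup>2) \<le> B" using assms(1)[OF that] unfolding L2_set_def .
    then show ?thesis by (metis assms(2) real_le_rsqrt real_sqrt_le_iff sqrt_le_D)
  qed
  show "l2 g" using l2I_bound(1)[OF fin] .
  show "l2_norm g \<le> B" using fin assms(2) by (intro l2_norm_le) auto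
qed

locale neumann =
  fixes B :: "('x::linordered_ab_group_add \<Rightarrow> complex) \<Rightarrow> ('x \<Rightarrow> complex)" and r :: real
  assumes Bmap: "g \<in> l2_plus \<Longrightarrow> B g \<in> l2_plus"
    and Blin: "f \<in> l2_plus \<Longrightarrow> g \<in> l2_plus \<Longrightarrow> B (\<lambda>\<xi>. a * f \<xi> + b * g \<xi>) = (\<lambda>\<xi>. a * B f \<xi> + b * B g \<xi>)"
    and Bnorm: "g \<in> l2_plus \<Longrightarrow> l2_norm (B g) \<le> r * l2_norm g"
    and r0: "0 \<le> r" and r1: "r < 1"
begin

definition P :: "nat \<Rightarrow> ('x \<Rightarrow> complex) \<Rightarrow> ('x \<Rightarrow> complex)" where "P n = B ^^ n"

lemma P_0: "P 0 g = g" by (simp add: P_def)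
lemma P_Suc: "P (Suc n) g = B (P n g)" by (simp add: P_def)
lemma P_Suc': "P (Suc n) g = P n (B g)" by (simp add: P_def funpow_Suc_right del: funpow.simps)
lemma P_add: "P (n + m) g = P n (P m g)" by (simp add: P_def funpow_add)

lemma P_map: "g \<in> l2_plus \<Longrightarrow> P n g \<in> l2_plus"
  by (induction n) (auto simp: P_0 P_Suc Bmap)

lemma P_lin: "f \<in> l2_plus \<Longrightarrow> g \<in> l2_plus \<Longrightarrow> P n (\<lambda>\<xi>. a * f \<xi> + b * g \<xi>) = (\<lambda>\<xi>. a * P n f \<xi> + b * P n g \<xi>)"
  by (induction n) (auto simp: P_0 P_Suc Blin P_map)

lemma P_norm: "g \<in> l2_plus \<Longrightarrow> l2_norm (P n g) \<le> r ^ n * l2_norm g"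
proof (induction n)
  case 0 then show ?case by (simp add: P_0)
next
  case (Suc n)
  have "l2_norm (P (Suc n) g) \<le> r * l2_norm (P n g)" unfolding P_Suc by (rule Bnorm[OF P_map[OF Suc.prems]])
  also have "\<dots> \<le> r * (r ^ n * l2_norm g)" using Suc r0 by (intro mult_left_mono) auto
  finally show ?case by simp
qed

lemma l2_plus_l2: "g \<in> l2_plus \<Longrightarrow> l2 g" unfolding l2_plus_iff by blast

lemma P_pt: "g \<in> l2_plus \<Longrightarrow> cmod (P n g \<xi>) \<le> r ^ n * l2_norm g"
  using l2_pt[OF l2_plus_l2[OF P_map]] P_norm order_trans by blast

lemma geom_summable: "summable (\<lambda>n. r ^ n * c)"
  using r0 r1 by (intro summable_mult2 summable_geometric) simp

lemma geom_sum: "(\<Sum>n. r ^ n * c) = c / (1 - r)"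
  using r0 r1 by (simp add: suminf_mult2[symmetric] suminf_geometric)

lemma P_summable: "g \<in> l2_plus \<Longrightarrow> summable (\<lambda>n. P n g \<xi>)"
  by (rule summable_comparison_test'[OF geom_summable, of 0]) (rule P_pt)

definition S :: "('x \<Rightarrow> complex) \<Rightarrow> ('x \<Rightarrow> complex)" where "S g = (\<lambda>\<xi>. \<Sum>n. P n g \<xi>)"

definition Q :: "nat \<Rightarrow> ('x \<Rightarrow> complex) \<Rightarrow> ('x \<Rightarrow> complex)" where "Q N g = (\<lambda>\<xi>. \<Sum>n<N. P n g \<xi>)"

lemma Q_map: "g \<in> l2_plus \<Longrightarrow> Q N g \<in> l2_plus"
  unfolding Q_def by (intro l2_plus_sum P_map) auto

lemma Q_tends: "g \<in> l2_plus \<Longrightarrow> (\<lambda>N. Q N g \<xi>) \<longlonglongrightarrow> S g \<xi>"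
  unfolding Q_def S_def using P_summable summable_LIMSEQ by blast

lemma L2_Q: "g \<in> l2_plus \<Longrightarrow> finite F \<Longrightarrow> L2_set (\<lambda>\<xi>. cmod (Q N g \<xi>)) F \<le> (\<Sum>n<N. r ^ n * l2_norm g)"
proof (induction N)
  case 0 then show ?case by (simp add: Q_def L2_set_def)
next
  case (Suc N)
  have "L2_set (\<lambda>\<xi>. cmod (Q (Suc N) g \<xi>)) F \<le> L2_set (\<lambda>\<xi>. cmod (Q N g \<xi>) + cmod (P N g \<xi>)) F"
    by (rule L2_set_mono) (auto simp: Q_def norm_triangle_ineq)
  also have "\<dots> \<le> L2_set (\<lambda>\<xi>. cmod (Q N g \<xi>)) F + L2_set (\<lambda>\<xi>. cmod (P N g \<xi>)) F"
    by (rule L2_set_triangle_ineq)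
  also have "\<dots> \<le> (\<Sum>n<N. r ^ n * l2_norm g) + r ^ N * l2_norm g"
    using Suc L2_set_le_l2_norm[OF l2_plus_l2[OF P_map[OF Suc.prems(1)]] Suc.prems(2), of N]
      P_norm[OF Suc.prems(1), of N] by linarith
  finally show ?case by simp
qed

lemma S_bound: assumes g: "g \<in> l2_plus" shows "S g \<in> l2_plus" "l2_norm (S g) \<le> l2_norm g / (1 - r)"
proof -
  have ng: "0 \<le> l2_norm g" by (rule l2_norm_nonneg)
  have fin: "L2_set (\<lambda>\<xi>. cmod (S g \<xi>)) F \<le> l2_norm g / (1 - r)" if F: "finite F" for F
  proof (rule LIMSEQ_le_const2)
    show "(\<lambda>N. L2_set (\<lambda>\<xi>. cmod (Q N g \<xi>)) F) \<longlonglongrightarrow> L2_set (\<lambda>\<xi>. cmod (S g \<xi>)) F"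
      unfolding L2_set_def by (intro tendsto_intros Q_tends g)
    have "(\<Sum>n<N. r ^ n * l2_norm g) \<le> (\<Sum>n. r ^ n * l2_norm g)" for N
      using ng r0 by (intro sum_le_suminf geom_summable) auto
    then show "\<exists>N. \<forall>n\<ge>N. L2_set (\<lambda>\<xi>. cmod (Q n g \<xi>)) F \<le> l2_norm g / (1 - r)"
      using L2_Q[OF g F] geom_sum order_trans by metis
  qed
  have B0: "0 \<le> l2_norm g / (1 - r)" using ng r1 by simp
  have "l2 (S g)" using l2_from_L2_set(1)[OF fin B0] by blast
  moreover have "\<not> 0 \<le> \<xi> \<Longrightarrow> S g \<xi> = 0" for \<xi>
    using P_map[OF g] unfolding S_def l2_plus_iff by simp
  ultimately show "S g \<in> l2_plus" unfolding l2_plus_iff by blast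
  show "l2_norm (S g) \<le> l2_norm g / (1 - r)" using l2_from_L2_set(2)[OF fin B0] by blast
qed

lemma S_lin: "f \<in> l2_plus \<Longrightarrow> g \<in> l2_plus \<Longrightarrow> S (\<lambda>\<xi>. a * f \<xi> + b * g \<xi>) = (\<lambda>\<xi>. a * S f \<xi> + b * S g \<xi>)"
proof -
  assume f: "f \<in> l2_plus" and g: "g \<in> l2_plus"
  show ?thesis unfolding S_def P_lin[OF f g]
  proof
    fix \<xi>
    show "(\<Sum>n. a * P n f \<xi> + b * P n g \<xi>) = a * (\<Sum>n. P n f \<xi>) + b * (\<Sum>n. P n g \<xi>)"
      using P_summable[OF f, of \<xi>] P_summable[OF g, of \<xi>]
      by (simp add: suminf_add[symmetric] suminf_mult summable_mult)
  qed
qed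

lemma S_left: assumes g: "g \<in> l2_plus" shows "S (\<lambda>\<xi>. g \<xi> - B g \<xi>) = g"
proof
  fix \<xi>
  have e: "(\<lambda>\<xi>. g \<xi> - B g \<xi>) = (\<lambda>\<xi>. 1 * g \<xi> + (-1) * B g \<xi>)" by simp
  have "P n (\<lambda>\<xi>. g \<xi> - B g \<xi>) \<xi> = P n g \<xi> - P (Suc n) g \<xi>" for n
    unfolding e P_lin[OF g Bmap[OF g]] P_Suc' by simp
  moreover have "(\<lambda>n. P n g \<xi>) \<longlonglongrightarrow> 0"
  proof (rule Lim_null_comparison)
    show "\<forall>\<^sub>F n in sequentially. norm (P n g \<xi>) \<le> r ^ n * l2_norm g" using P_pt[OF g] by simp
    show "(\<lambda>n. r ^ n * l2_norm g) \<longlonglongrightarrow> 0" using r0 r1 by (intro tendsto_mult_left_zero LIMSEQ_power_zero) auto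
  qed
  then have "(\<lambda>n. P n g \<xi> - P (Suc n) g \<xi>) sums (P 0 g \<xi> - 0)" by (rule telescope_sums')
  ultimately show "S (\<lambda>\<xi>. g \<xi> - B g \<xi>) \<xi> = g \<xi>" unfolding S_def by (simp add: sums_iff P_0)
qed

lemma S_tail: "g \<in> l2_plus \<Longrightarrow> (\<lambda>\<xi>. S g \<xi> - Q N g \<xi>) = S (P N g)"
proof
  fix \<xi> assume g: "g \<in> l2_plus"
  have "S g \<xi> = (\<Sum>n. P (n + N) g \<xi>) + Q N g \<xi>"
    unfolding S_def Q_def by (rule suminf_split_initial_segment[OF P_summable[OF g]])
  then show "S g \<xi> - Q N g \<xi> = S (P N g) \<xi>" unfolding S_def by (simp add: P_add)
qed

lemma BQ: "g \<in> l2_plus \<Longrightarrow> B (Q N g) = (\<lambda>\<xi>. Q (Suc N) g \<xi> - g \<xi>)"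
proof (induction N)
  case 0
  have "B (\<lambda>\<xi>. 0 * g \<xi> + 0 * g \<xi>) = (\<lambda>\<xi>. 0 * B g \<xi> + 0 * B g \<xi>)" by (rule Blin[OF 0 0])
  then show ?case by (simp add: Q_def P_0)
next
  case (Suc N)
  have e: "Q (Suc N) g = (\<lambda>\<xi>. 1 * Q N g \<xi> + 1 * P N g \<xi>)" unfolding Q_def by simp
  show ?case unfolding e Blin[OF Q_map[OF Suc.prems] P_map[OF Suc.prems]] Suc.IH[OF Suc.prems]
    by (auto simp: Q_def P_Suc)
qed

lemma S_right: assumes g: "g \<in> l2_plus" shows "(\<lambda>\<xi>. S g \<xi> - B (S g) \<xi>) = g"
proof
  fix \<xi>
  have Sg: "S g \<in> l2_plus" using S_bound(1)[OF g] .
  have lim1: "(\<lambda>N. B (Q N g) \<xi>) \<longlonglongrightarrow> S g \<xi> - g \<xi>"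
    unfolding BQ[OF g] by (intro tendsto_diff tendsto_const) (rule LIMSEQ_Suc[OF Q_tends[OF g]])
  have lim2: "(\<lambda>N. B (Q N g) \<xi>) \<longlonglongrightarrow> B (S g) \<xi>"
  proof (rule LIM_zero_cancel, rule Lim_null_comparison)
    have "norm (B (Q N g) \<xi> - B (S g) \<xi>) \<le> r * (r ^ N * l2_norm g / (1 - r))" for N
    proof -
      have d: "(\<lambda>\<xi>. Q N g \<xi> - S g \<xi>) = (\<lambda>\<xi>. (-1) * (S g \<xi> - Q N g \<xi>))" by auto
      have PNg: "P N g \<in> l2_plus" by (rule P_map[OF g])
      have "B (Q N g) \<xi> - B (S g) \<xi> = B (\<lambda>\<xi>. 1 * Q N g \<xi> + (-1) * S g \<xi>) \<xi>"
        using Blin[OF Q_map[OF g] Sg, where a=1 and b="-1"] by simp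
      also have "\<dots> = B (\<lambda>\<xi>. (-1) * S (P N g) \<xi>) \<xi>" using S_tail[OF g, of N] d
        by (metis (no_types, lifting) ext diff_conv_add_uminus mult_minus1 uminus_add_conv_diff mult_1)
      finally have eq: "B (Q N g) \<xi> - B (S g) \<xi> = B (\<lambda>\<xi>. (-1) * S (P N g) \<xi>) \<xi>" .
      have SP: "S (P N g) \<in> l2_plus" by (rule S_bound(1)[OF PNg])
      have m: "(\<lambda>\<xi>. (-1) * S (P N g) \<xi>) \<in> l2_plus" using l2_plus_lin[OF SP SP, of "-1" 0] by simp
      have "norm (B (\<lambda>\<xi>. (-1) * S (P N g) \<xi>) \<xi>) \<le> l2_norm (B (\<lambda>\<xi>. (-1) * S (P N g) \<xi>))"
        by (rule l2_pt[OF l2_plus_l2[OF Bmap[OF m]]])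
      also have "\<dots> \<le> r * l2_norm (\<lambda>\<xi>. (-1) * S (P N g) \<xi>)" by (rule Bnorm[OF m])
      also have "l2_norm (\<lambda>\<xi>. (-1) * S (P N g) \<xi>) = l2_norm (S (P N g))" unfolding l2_norm_def by simp
      also have "l2_norm (S (P N g)) \<le> l2_norm (P N g) / (1 - r)" by (rule S_bound(2)[OF PNg])
      also have "\<dots> \<le> r ^ N * l2_norm g / (1 - r)" using P_norm[OF g, of N] r1 by (simp add: divide_right_mono)
      finally show ?thesis using eq r0 by (simp add: mult_left_mono)
    qed
    then show "\<forall>\<^sub>F N in sequentially. norm (B (Q N g) \<xi> - B (S g) \<xi>) \<le> r * (r ^ N * l2_norm g / (1 - r))"
      by simp
    show "(\<lambda>N. r * (r ^ N * l2_norm g / (1 - r))) \<longlonglongrightarrow> 0"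
      using r0 r1 by (intro tendsto_mult_right_zero tendsto_divide_zero tendsto_mult_left_zero LIMSEQ_power_zero) auto
  qed
  have "B (S g) \<xi> = S g \<xi> - g \<xi>" using LIMSEQ_unique[OF lim2 lim1] .
  then show "S g \<xi> - B (S g) \<xi> = g \<xi>" by simp
qed

lemma inverse_exists:
  "\<exists>S. (\<forall>g\<in>l2_plus. S g \<in> l2_plus) \<and>
      (\<forall>f\<in>l2_plus. \<forall>g\<in>l2_plus. \<forall>a b. S (\<lambda>\<xi>. a * f \<xi> + b * g \<xi>) = (\<lambda>\<xi>. a * S f \<xi> + b * S g \<xi>)) \<and>
      (\<exists>C. \<forall>g\<in>l2_plus. l2_norm (S g) \<le> C * l2_norm g) \<and>
      (\<forall>g\<in>l2_plus. S (\<lambda>\<xi>. g \<xi> - B g \<xi>) = g) \<and>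
      (\<forall>g\<in>l2_plus. (\<lambda>\<xi>. S g \<xi> - B (S g) \<xi>) = g)"
proof (intro exI[of _ S] conjI ballI allI)
  show "\<exists>C. \<forall>g\<in>l2_plus. l2_norm (S g) \<le> C * l2_norm g"
    using S_bound(2) by (intro exI[of _ "1 / (1 - r)"]) simp
qed (auto simp: S_bound(1) S_lin S_left S_right)

end


lemma nsq_add_le_pt: "(cmod (u + v))\<^sup>2 \<le> 2 * (cmod u)\<^sup>2 + 2 * (cmod v)\<^sup>2"
  by (rule sq_add_le)

lemma pos_aux: "0 < (e::real) \<Longrightarrow> 0 \<le> x \<Longrightarrow> 0 < e / (x + 1)"
  by (intro divide_pos_pos) linarith+

context haar
begin

lemma nsq_cong: "(\<And>\<omega>. \<omega> \<in> space \<mu> \<Longrightarrow> cmod (f \<omega>) = cmod (g \<omega>)) \<Longrightarrow> nsq \<mu> f = nsq \<mu> g"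
  unfolding nsq_def by (rule Bochner_Integration.integral_cong) auto

lemma nsq_add_le: "bdd \<mu> u \<Longrightarrow> bdd \<mu> v \<Longrightarrow> nsq \<mu> (\<lambda>\<omega>. u \<omega> + v \<omega>) \<le> 2 * nsq \<mu> u + 2 * nsq \<mu> v"
proof -
  assume u: "bdd \<mu> u" and v: "bdd \<mu> v"
  have "nsq \<mu> (\<lambda>\<omega>. u \<omega> + v \<omega>) \<le> (LINT \<omega>|\<mu>. 2 * (cmod (u \<omega>))\<^sup>2 + 2 * (cmod (v \<omega>))\<^sup>2)"
    unfolding nsq_def
    by (intro integral_mono nsq_integrable bdd_add u v Bochner_Integration.integrable_add
        integrable_mult_right sq_add_le)
  also have "\<dots> = 2 * nsq \<mu> u + 2 * nsq \<mu> v" unfolding nsq_def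
    by (simp add: nsq_integrable u v)
  finally show ?thesis .
qed

lemma nsq_diff_sym: "nsq \<mu> (\<lambda>\<omega>. f \<omega> - g \<omega>) = nsq \<mu> (\<lambda>\<omega>. g \<omega> - f \<omega>)"
  by (rule nsq_cong) (simp add: norm_minus_commute)

lemma tpo_bound: "finite F \<Longrightarrow> \<omega> \<in> space \<mu> \<Longrightarrow> cmod (tpo F g \<omega>) \<le> (\<Sum>\<xi>\<in>F. cmod (g \<xi>))"
  unfolding tpo_def using sp
  by (auto intro!: order_trans[OF norm_sum] sum_mono simp: norm_mult dual_norm)

lemma tpo_mult: assumes F: "finite F" and G: "finite G"
  shows "\<exists>H g''. finite H \<and> (\<forall>\<omega>. tpo F g \<omega> * tpo G g' \<omega> = tpo H g'' \<omega> \<or> \<omega> \<notin> space \<mu>)"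
proof -
  define H where "H = (\<lambda>(\<xi>, \<eta>). \<xi> + \<eta>) ` (F \<times> G)"
  define g'' where "g'' \<zeta> = (\<Sum>p\<in>{p \<in> F \<times> G. (\<lambda>(\<xi>, \<eta>). \<xi> + \<eta>) p = \<zeta>}. g (fst p) * g' (snd p))" for \<zeta>
  have "tpo F g \<omega> * tpo G g' \<omega> = tpo H g'' \<omega>" if w: "\<omega> \<in> space \<mu>" for \<omega>
  proof -
    have "tpo F g \<omega> * tpo G g' \<omega> = (\<Sum>p\<in>F \<times> G. g (fst p) * g' (snd p) * \<omega> ((\<lambda>(\<xi>, \<eta>). \<xi> + \<eta>) p))"
      unfolding tpo_def sum_product sum.cartesian_product using w sp
      by (intro sum.cong) (auto simp: dual_mult)
    also have "\<dots> = (\<Sum>\<zeta>\<in>H. \<Sum>p\<in>{p \<in> F \<times> G. (\<lambda>(\<xi>, \<eta>). \<xi> + \<eta>) p = \<zeta>}. g (fst p) * g' (snd p) * \<omega> ((\<lambda>(\<xi>, \<eta>). \<xi> + \<eta>) p))"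
      unfolding H_def using F G by (rule sum.image_gen[OF finite_cartesian_product])
    also have "\<dots> = tpo H g'' \<omega>"
      unfolding tpo_def g''_def sum_distrib_right by (intro sum.cong refl) auto
    finally show ?thesis .
  qed
  moreover have "finite H" unfolding H_def using F G by simp
  ultimately show ?thesis by blast
qed

definition approx :: "(('x \<Rightarrow> complex) \<Rightarrow> complex) \<Rightarrow> bool" where
  "approx f \<longleftrightarrow> bdd \<mu> f \<and> (\<forall>e>0. \<exists>F g. finite F \<and> nsq \<mu> (\<lambda>\<omega>. f \<omega> - tpo F g \<omega>) < e)"

lemma approx_bdd: "approx f \<Longrightarrow> bdd \<mu> f" unfolding approx_def by blast

lemma approx_const: "approx (\<lambda>_. c)"
  unfolding approx_def
proof (intro conjI allI impI bdd_const)
  fix e :: real assume e: "0 < e"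
  have "nsq \<mu> (\<lambda>\<omega>. c - tpo {0} (\<lambda>_. c) \<omega>) = nsq \<mu> (\<lambda>_. 0)"
    by (rule nsq_cong) (auto simp: tpo_def sp dual_zero)
  then show "\<exists>F g. finite F \<and> nsq \<mu> (\<lambda>\<omega>. c - tpo F g \<omega>) < e"
    using e by (intro exI[of _ "{0}"] exI[of _ "\<lambda>_. c"]) (simp add: nsq_def)
qed

lemma approx_lin:
  assumes f: "approx f" and g: "approx g"
  shows "approx (\<lambda>\<omega>. a * f \<omega> + b * g \<omega>)"
  unfolding approx_def
proof (intro conjI allI impI)
  show "bdd \<mu> (\<lambda>\<omega>. a * f \<omega> + b * g \<omega>)" using f g by (intro bdd_add bdd_scale approx_bdd)
  fix e :: real assume e: "0 < e"
  define e' where "e' = e / (4 * (cmod a)\<^sup>2 + 4 * (cmod b)\<^sup>2 + 1)"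
  have e': "0 < e'" unfolding e'_def using e by (intro pos_aux) auto
  obtain F1 p1 where 1: "finite F1" "nsq \<mu> (\<lambda>\<omega>. f \<omega> - tpo F1 p1 \<omega>) < e'" using f e' unfolding approx_def by blast
  obtain F2 p2 where 2: "finite F2" "nsq \<mu> (\<lambda>\<omega>. g \<omega> - tpo F2 p2 \<omega>) < e'" using g e' unfolding approx_def by blast
  define F where "F = F1 \<union> F2"
  define p where "p \<xi> = a * (if \<xi> \<in> F1 then p1 \<xi> else 0) + b * (if \<xi> \<in> F2 then p2 \<xi> else 0)" for \<xi>
  have F: "finite F" unfolding F_def using 1 2 by simp
  have tp: "tpo F p \<omega> = a * tpo F1 p1 \<omega> + b * tpo F2 p2 \<omega>" for \<omega>
  proof -
    have "tpo F p \<omega> = a * (\<Sum>\<xi>\<in>F. (if \<xi> \<in> F1 then p1 \<xi> else 0) * \<omega> \<xi>) + b * (\<Sum>\<xi>\<in>F. (if \<xi> \<in> F2 then p2 \<xi> else 0) * \<omega> \<xi>)"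
      unfolding tpo_def p_def by (simp add: sum.distrib sum_distrib_left algebra_simps)
    also have "(\<Sum>\<xi>\<in>F. (if \<xi> \<in> F1 then p1 \<xi> else 0) * \<omega> \<xi>) = tpo F1 p1 \<omega>"
      unfolding tpo_def F_def using 1 2 by (intro sum.mono_neutral_cong_right) auto
    also have "(\<Sum>\<xi>\<in>F. (if \<xi> \<in> F2 then p2 \<xi> else 0) * \<omega> \<xi>) = tpo F2 p2 \<omega>"
      unfolding tpo_def F_def using 1 2 by (intro sum.mono_neutral_cong_right) auto
    finally show ?thesis .
  qed
  have bf: "bdd \<mu> (\<lambda>\<omega>. f \<omega> - tpo F1 p1 \<omega>)" using f 1 by (intro bdd_diff approx_bdd bdd_tpo)
  have bg: "bdd \<mu> (\<lambda>\<omega>. g \<omega> - tpo F2 p2 \<omega>)" using g 2 by (intro bdd_diff approx_bdd bdd_tpo)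
  have "nsq \<mu> (\<lambda>\<omega>. (a * f \<omega> + b * g \<omega>) - tpo F p \<omega>)
      = nsq \<mu> (\<lambda>\<omega>. a * (f \<omega> - tpo F1 p1 \<omega>) + b * (g \<omega> - tpo F2 p2 \<omega>))"
    unfolding tp by (rule nsq_cong) (simp add: algebra_simps)
  also have "\<dots> \<le> 2 * nsq \<mu> (\<lambda>\<omega>. a * (f \<omega> - tpo F1 p1 \<omega>)) + 2 * nsq \<mu> (\<lambda>\<omega>. b * (g \<omega> - tpo F2 p2 \<omega>))"
    using bf bg by (intro nsq_add_le bdd_scale)
  also have "nsq \<mu> (\<lambda>\<omega>. a * (f \<omega> - tpo F1 p1 \<omega>)) = (cmod a)\<^sup>2 * nsq \<mu> (\<lambda>\<omega>. f \<omega> - tpo F1 p1 \<omega>)"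
    unfolding nsq_def by (simp add: norm_mult power_mult_distrib)
  also have "nsq \<mu> (\<lambda>\<omega>. b * (g \<omega> - tpo F2 p2 \<omega>)) = (cmod b)\<^sup>2 * nsq \<mu> (\<lambda>\<omega>. g \<omega> - tpo F2 p2 \<omega>)"
    unfolding nsq_def by (simp add: norm_mult power_mult_distrib)
  also have "2 * ((cmod a)\<^sup>2 * nsq \<mu> (\<lambda>\<omega>. f \<omega> - tpo F1 p1 \<omega>)) + 2 * ((cmod b)\<^sup>2 * nsq \<mu> (\<lambda>\<omega>. g \<omega> - tpo F2 p2 \<omega>))
      \<le> 2 * ((cmod a)\<^sup>2 * e') + 2 * ((cmod b)\<^sup>2 * e')"
    using 1(2) 2(2) by (intro add_mono mult_left_mono) auto
  also have "\<dots> < e"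
  proof -
    have d: "0 < 4 * (cmod a)\<^sup>2 + 4 * (cmod b)\<^sup>2 + 1"
      using zero_le_power2[of "cmod a"] zero_le_power2[of "cmod b"] by linarith
    have "2 * ((cmod a)\<^sup>2 * e') + 2 * ((cmod b)\<^sup>2 * e') = (2 * (cmod a)\<^sup>2 + 2 * (cmod b)\<^sup>2) * e'"
      by (simp add: algebra_simps)
    also have "\<dots> < (4 * (cmod a)\<^sup>2 + 4 * (cmod b)\<^sup>2 + 1) * e'"
      using e' zero_le_power2[of "cmod a"] zero_le_power2[of "cmod b"] by (intro mult_strict_right_mono) linarith+
    also have "\<dots> = e * 1" unfolding e'_def using d by simp
    finally show ?thesis by simp
  qed
  finally show "\<exists>F p. finite F \<and> nsq \<mu> (\<lambda>\<omega>. (a * f \<omega> + b * g \<omega>) - tpo F p \<omega>) < e"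
    using F by blast
qed

lemma approx_cnj: assumes f: "approx f" shows "approx (\<lambda>\<omega>. cnj (f \<omega>))"
  unfolding approx_def
proof (intro conjI allI impI)
  show "bdd \<mu> (\<lambda>\<omega>. cnj (f \<omega>))" using f by (intro bdd_cnj approx_bdd)
  fix e :: real assume e: "0 < e"
  obtain F p where 1: "finite F" "nsq \<mu> (\<lambda>\<omega>. f \<omega> - tpo F p \<omega>) < e" using f e unfolding approx_def by blast
  have "cnj (tpo F p \<omega>) = tpo (uminus ` F) (\<lambda>\<zeta>. cnj (p (- \<zeta>))) \<omega>" if w: "\<omega> \<in> space \<mu>" for \<omega>
    unfolding tpo_def using w sp by (subst sum.reindex) (auto simp: inj_on_def dual_neg)
  then have "nsq \<mu> (\<lambda>\<omega>. cnj (f \<omega>) - tpo (uminus ` F) (\<lambda>\<zeta>. cnj (p (- \<zeta>))) \<omega>) = nsq \<mu> (\<lambda>\<omega>. f \<omega> - tpo F p \<omega>)"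
    by (intro nsq_cong) (metis complex_cnj_diff complex_mod_cnj)
  then show "\<exists>F g. finite F \<and> nsq \<mu> (\<lambda>\<omega>. cnj (f \<omega>) - tpo F g \<omega>) < e" using 1 by (metis finite_imageI)
qed

lemma approx_mult: assumes f: "approx f" and g: "approx g" shows "approx (\<lambda>\<omega>. f \<omega> * g \<omega>)"
  unfolding approx_def
proof (intro conjI allI impI)
  have bf: "bdd \<mu> f" and bg: "bdd \<mu> g" using f g by (auto intro: approx_bdd)
  show "bdd \<mu> (\<lambda>\<omega>. f \<omega> * g \<omega>)" using bf bg by (rule bdd_mult)
  fix e :: real assume e: "0 < e"
  obtain Mf where Mf: "0 \<le> Mf" "AE \<omega> in \<mu>. cmod (f \<omega>) \<le> Mf" using bf by (rule bdd_bound)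
  define e1 where "e1 = e / (4 * Mf\<^sup>2 + 1)"
  have e1: "0 < e1" unfolding e1_def using e by (intro pos_aux) auto
  obtain G q where 2: "finite G" "nsq \<mu> (\<lambda>\<omega>. g \<omega> - tpo G q \<omega>) < e1" using g e1 unfolding approx_def by blast
  define Bq where "Bq = (\<Sum>\<xi>\<in>G. cmod (q \<xi>))"
  have Bq: "AE \<omega> in \<mu>. cmod (tpo G q \<omega>) \<le> Bq" unfolding Bq_def using 2(1) by (intro AE_I2 tpo_bound)
  define e2 where "e2 = e / (4 * Bq\<^sup>2 + 1)"
  have e2: "0 < e2" unfolding e2_def using e by (intro pos_aux) auto
  obtain F p where 1: "finite F" "nsq \<mu> (\<lambda>\<omega>. f \<omega> - tpo F p \<omega>) < e2" using f e2 unfolding approx_def by blast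
  obtain H r where H: "finite H" "\<And>\<omega>. \<omega> \<in> space \<mu> \<Longrightarrow> tpo F p \<omega> * tpo G q \<omega> = tpo H r \<omega>"
    using tpo_mult[OF 1(1) 2(1), of p q] by blast
  have "nsq \<mu> (\<lambda>\<omega>. f \<omega> * g \<omega> - tpo H r \<omega>) = nsq \<mu> (\<lambda>\<omega>. f \<omega> * (g \<omega> - tpo G q \<omega>) + tpo G q \<omega> * (f \<omega> - tpo F p \<omega>))"
    using H(2) by (intro nsq_cong) (simp add: algebra_simps)
  also have "\<dots> \<le> 2 * nsq \<mu> (\<lambda>\<omega>. f \<omega> * (g \<omega> - tpo G q \<omega>)) + 2 * nsq \<mu> (\<lambda>\<omega>. tpo G q \<omega> * (f \<omega> - tpo F p \<omega>))"
    using bf bg 1(1) 2(1) by (intro nsq_add_le bdd_mult bdd_diff bdd_tpo)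
  also have "\<dots> \<le> 2 * (Mf\<^sup>2 * nsq \<mu> (\<lambda>\<omega>. g \<omega> - tpo G q \<omega>)) + 2 * (Bq\<^sup>2 * nsq \<mu> (\<lambda>\<omega>. f \<omega> - tpo F p \<omega>))"
    using bf bg 1(1) 2(1) Mf Bq
    by (intro add_mono mult_left_mono nsq_mult_le bdd_diff bdd_tpo) auto
  also have "\<dots> \<le> 2 * (Mf\<^sup>2 * e1) + 2 * (Bq\<^sup>2 * e2)"
    using 1(2) 2(2) by (intro add_mono mult_left_mono) auto
  also have "\<dots> < e"
  proof -
    have d1: "0 < 4 * Mf\<^sup>2 + 1" using zero_le_power2[of Mf] by linarith
    have d2: "0 < 4 * Bq\<^sup>2 + 1" using zero_le_power2[of Bq] by linarith
    have a: "2 * (Mf\<^sup>2 * e1) \<le> e / 2" unfolding e1_def using e d1 by (simp add: field_simps)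
    have b: "2 * (Bq\<^sup>2 * e2) < e / 2" unfolding e2_def using e d2 by (simp add: field_simps)
    show ?thesis using a b by simp
  qed
  finally show "\<exists>F g'. finite F \<and> nsq \<mu> (\<lambda>\<omega>. f \<omega> * g \<omega> - tpo F g' \<omega>) < e" using H(1) by blast
qed

lemma approx_pow: "approx f \<Longrightarrow> approx (\<lambda>\<omega>. f \<omega> ^ n)"
  by (induction n) (auto intro: approx_mult approx_const)

end


locale mainctx = haar \<mu> for \<mu> :: "('x::linordered_ab_group_add \<Rightarrow> complex) measure" +
  fixes k :: "'x \<Rightarrow> complex" and h :: "('x \<Rightarrow> complex) \<Rightarrow> complex"
  assumes kl2: "(\<lambda>\<xi>. (cmod (k \<xi>))\<^sup>2) summable_on UNIV"
    and chk: "is_check \<mu> k h"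
    and hb: "\<exists>C. AE x in \<mu>. cmod (h x) \<le> C"
begin

lemma k_l2: "l2 k" using kl2 unfolding l2_def .

lemma h_bdd: "bdd \<mu> h" using chk hb unfolding is_check_def bdd_def by blast

lemma h_approx_tpo:
  assumes e: "0 < e"
  shows "\<exists>X. finite X \<and> (\<forall>Y. finite Y \<and> X \<subseteq> Y \<longrightarrow> nsq \<mu> (\<lambda>\<omega>. h \<omega> - tpo Y k \<omega>) < e)"
proof -
  have lim: "((\<lambda>F. \<integral>\<^sup>+ x. ennreal ((cmod (h x - (\<Sum>\<xi>\<in>F. k \<xi> * x \<xi>)))\<^sup>2) \<partial>\<mu>) \<longlongrightarrow> 0) (finite_subsets_at_top UNIV)"
    using chk unfolding is_check_def by blast
  define P where "P F \<longleftrightarrow> (\<integral>\<^sup>+ x. ennreal ((cmod (h x - (\<Sum>\<xi>\<in>F. k \<xi> * x \<xi>)))\<^sup>2) \<partial>\<mu>) < ennreal e" for F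
  have "eventually P (finite_subsets_at_top UNIV)"
    unfolding P_def by (rule order_tendstoD(2)[OF lim]) (use e in simp)
  then have "\<exists>X. finite X \<and> (\<forall>Y. finite Y \<and> X \<subseteq> Y \<longrightarrow> P Y)"
    by (simp add: eventually_finite_subsets_at_top)
  then obtain X where X: "finite X" "\<And>Y. finite Y \<Longrightarrow> X \<subseteq> Y \<Longrightarrow> P Y"
    by auto
  have "nsq \<mu> (\<lambda>\<omega>. h \<omega> - tpo Y k \<omega>) < e" if Y: "finite Y" "X \<subseteq> Y" for Y
  proof -
    have b: "bdd \<mu> (\<lambda>\<omega>. h \<omega> - tpo Y k \<omega>)" by (intro bdd_diff h_bdd bdd_tpo Y)
    have "(\<integral>\<^sup>+ x. ennreal ((cmod (h x - (\<Sum>\<xi>\<in>Y. k \<xi> * x \<xi>)))\<^sup>2) \<partial>\<mu>) = ennreal (nsq \<mu> (\<lambda>\<omega>. h \<omega> - tpo Y k \<omega>))"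
      unfolding nsq_def tpo_def[symmetric] by (intro nn_integral_eq_integral nsq_integrable b) auto
    then have "ennreal (nsq \<mu> (\<lambda>\<omega>. h \<omega> - tpo Y k \<omega>)) < ennreal e" using X(2)[OF Y] unfolding P_def by simp
    then show ?thesis by (simp add: ennreal_less_iff nsq_nonneg)
  qed
  then show ?thesis using X(1) by blast
qed

lemma coef_h: "coef h = k"
proof
  fix \<xi>
  have "(cmod (coef h \<xi> - k \<xi>))\<^sup>2 \<le> e" if e: "0 < e" for e
  proof -
    obtain X where X: "finite X" "\<And>Y. finite Y \<Longrightarrow> X \<subseteq> Y \<Longrightarrow> nsq \<mu> (\<lambda>\<omega>. h \<omega> - tpo Y k \<omega>) < e"
      using h_approx_tpo[OF e] by blast
    define Y where "Y = insert \<xi> X"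
    have Y: "finite Y" "X \<subseteq> Y" "\<xi> \<in> Y" unfolding Y_def using X(1) by auto
    have "coef h \<xi> - k \<xi> = ip \<mu> (\<lambda>\<omega>. h \<omega> - tpo Y k \<omega>) (\<lambda>\<omega>. \<omega> \<xi>)"
      unfolding coef_def using Y by (simp add: ip_diff_left h_bdd bdd_tpo bdd_ech coef_tpo)
    then have "(cmod (coef h \<xi> - k \<xi>))\<^sup>2 \<le> nsq \<mu> (\<lambda>\<omega>. h \<omega> - tpo Y k \<omega>)"
      using bessel[OF bdd_diff[OF h_bdd bdd_tpo[OF Y(1)]], of "{\<xi>}"] by simp
    then show ?thesis using X(2)[OF Y(1,2)] by simp
  qed
  then have "(cmod (coef h \<xi> - k \<xi>))\<^sup>2 \<le> 0" by (metis field_le_epsilon add_0)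
  then show "coef h \<xi> = k \<xi>" by simp
qed

lemma h_approx: "approx h"
  unfolding approx_def
proof (intro conjI allI impI h_bdd)
  fix e :: real assume "0 < e"
  then obtain X where "finite X" "nsq \<mu> (\<lambda>\<omega>. h \<omega> - tpo X k \<omega>) < e" using h_approx_tpo by blast
  then show "\<exists>F g. finite F \<and> nsq \<mu> (\<lambda>\<omega>. h \<omega> - tpo F g \<omega>) < e" by blast
qed

lemma W_conv: "W k g \<xi> = (if 0 \<le> \<xi> then conv k g \<xi> else 0)" unfolding W_def by simp

lemma lower_pos:
  assumes Sinv: "\<forall>g\<in>l2_plus. S (\<lambda>\<xi>. W k g \<xi> - z * g \<xi>) = g"
    and Sb: "\<forall>g\<in>l2_plus. l2_norm (S g) \<le> C * l2_norm g"
    and C: "0 \<le> C" and F: "finite F" and Fpos: "\<forall>\<xi>\<in>F. 0 \<le> \<xi>"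
  shows "nsq \<mu> (tpo F g) \<le> C\<^sup>2 * nsq \<mu> (\<lambda>\<omega>. (h \<omega> - z) * tpo F g \<omega>)"
proof -
  define g' where "g' \<xi> = (if \<xi> \<in> F then g \<xi> else 0)" for \<xi>
  have tp: "tpo F g' = tpo F g" unfolding tpo_def g'_def by (intro ext sum.cong) auto
  have hs: "((\<lambda>\<xi>. (cmod (g' \<xi>))\<^sup>2) has_sum (\<Sum>\<xi>\<in>F. (cmod (g \<xi>))\<^sup>2)) UNIV"
    by (rule has_sum_finite_neutralI[OF F]) (auto simp: g'_def)
  have g'l2: "l2 g'" using hs unfolding l2_def summable_on_def by blast
  have g'n: "(l2_norm g')\<^sup>2 = (\<Sum>\<xi>\<in>F. (cmod (g \<xi>))\<^sup>2)" unfolding l2_norm_sq using infsumI[OF hs] .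
  have g'p: "g' \<in> l2_plus" unfolding l2_plus_iff using g'l2 Fpos by (auto simp: g'_def)
  define A where "A \<xi> = W k g' \<xi> - z * g' \<xi>" for \<xi>
  define \<Phi> where "\<Phi> \<omega> = (h \<omega> - z) * tpo F g' \<omega>" for \<omega>
  have b\<Phi>: "bdd \<mu> \<Phi>" unfolding \<Phi>_def by (intro bdd_mult bdd_diff h_bdd bdd_const bdd_tpo F)
  have ipPhi: "ip \<mu> \<Phi> (\<lambda>\<omega>. \<omega> \<xi>) = conv k g' \<xi> - z * g' \<xi>" for \<xi>
  proof -
    have e: "\<Phi> = (\<lambda>\<omega>. h \<omega> * tpo F g' \<omega> - z * tpo F g' \<omega>)" unfolding \<Phi>_def by (simp add: algebra_simps)
    have "ip \<mu> \<Phi> (\<lambda>\<omega>. \<omega> \<xi>) = ip \<mu> (\<lambda>\<omega>. h \<omega> * tpo F g' \<omega>) (\<lambda>\<omega>. \<omega> \<xi>) - z * ip \<mu> (tpo F g') (\<lambda>\<omega>. \<omega> \<xi>)"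
      unfolding e by (simp add: ip_diff_left ip_scale_left bdd_mult h_bdd bdd_tpo F bdd_scale bdd_ech)
    also have "\<dots> = (\<Sum>\<eta>\<in>F. k (\<xi> - \<eta>) * g' \<eta>) - z * g' \<xi>"
      by (simp add: coef_mult_tpo[OF h_bdd F] coef_h coef_tpo[OF F]) (simp add: g'_def)
    also have "(\<Sum>\<eta>\<in>F. k (\<xi> - \<eta>) * g' \<eta>) = conv k g' \<xi>"
      by (rule conv_fin[symmetric, OF F]) (simp add: g'_def)
    finally show ?thesis .
  qed
  have Ale: "cmod (A \<xi>) \<le> cmod (ip \<mu> \<Phi> (\<lambda>\<omega>. \<omega> \<xi>))" for \<xi>
  proof (cases "0 \<le> \<xi>")
    case True then show ?thesis unfolding A_def ipPhi W_conv by simp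
  next
    case False
    then have "\<xi> \<notin> F" using Fpos by auto
    then show ?thesis using False unfolding A_def W_conv by (simp add: g'_def)
  qed
  have finA: "(\<Sum>\<xi>\<in>E. (cmod (A \<xi>))\<^sup>2) \<le> nsq \<mu> \<Phi>" if E: "finite E" for E
  proof -
    have "(\<Sum>\<xi>\<in>E. (cmod (A \<xi>))\<^sup>2) \<le> (\<Sum>\<xi>\<in>E. (cmod (ip \<mu> \<Phi> (\<lambda>\<omega>. \<omega> \<xi>)))\<^sup>2)"
      by (intro sum_mono power_mono Ale) simp
    also have "\<dots> \<le> nsq \<mu> \<Phi>" by (rule bessel[OF b\<Phi> E])
    finally show ?thesis .
  qed
  have Al2: "l2 A" using l2I_bound(1)[OF finA] .
  have An: "(l2_norm A)\<^sup>2 \<le> nsq \<mu> \<Phi>" unfolding l2_norm_sq using l2I_bound(2)[OF finA] .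
  have Ap: "A \<in> l2_plus" unfolding l2_plus_iff using Al2 Fpos by (auto simp: A_def W_conv g'_def)
  have "g' = S A" using Sinv g'p unfolding A_def by simp
  then have "l2_norm g' \<le> C * l2_norm A" using Sb Ap by simp
  then have "(l2_norm g')\<^sup>2 \<le> (C * l2_norm A)\<^sup>2" using l2_norm_nonneg by (intro power_mono) auto
  also have "\<dots> = C\<^sup>2 * (l2_norm A)\<^sup>2" by (simp add: power_mult_distrib)
  also have "\<dots> \<le> C\<^sup>2 * nsq \<mu> \<Phi>" using An by (intro mult_left_mono) auto
  finally show ?thesis unfolding g'n nsq_tpo[OF F, symmetric] \<Phi>_def tp .
qed

lemma lower_all:
  assumes Sinv: "\<forall>g\<in>l2_plus. S (\<lambda>\<xi>. W k g \<xi> - z * g \<xi>) = g"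
    and Sb: "\<forall>g\<in>l2_plus. l2_norm (S g) \<le> C * l2_norm g"
    and C: "0 \<le> C" and F: "finite F"
  shows "nsq \<mu> (tpo F g) \<le> C\<^sup>2 * nsq \<mu> (\<lambda>\<omega>. (h \<omega> - z) * tpo F g \<omega>)"
proof -
  define \<eta>0 where "\<eta>0 = (if F = {} then 0 else - Min F)"
  define F' where "F' = (\<lambda>\<xi>. \<xi> + \<eta>0) ` F"
  define g'' where "g'' \<zeta> = g (\<zeta> - \<eta>0)" for \<zeta>
  have F': "finite F'" unfolding F'_def using F by simp
  have pos: "\<forall>\<xi>\<in>F'. 0 \<le> \<xi>"
  proof
    fix \<zeta> assume "\<zeta> \<in> F'"
    then obtain \<xi> where \<xi>: "\<xi> \<in> F" "\<zeta> = \<xi> + \<eta>0" unfolding F'_def by blast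
    then have "F \<noteq> {}" by auto
    then have "\<eta>0 = - Min F" unfolding \<eta>0_def by simp
    then have z: "\<zeta> = \<xi> - Min F" using \<xi>(2) by simp
    have "Min F \<le> \<xi>" using F \<xi>(1) by (rule Min_le)
    then show "0 \<le> \<zeta>" unfolding z by simp
  qed
  have tp: "tpo F' g'' \<omega> = \<omega> \<eta>0 * tpo F g \<omega>" if w: "\<omega> \<in> space \<mu>" for \<omega>
  proof -
    have "tpo F' g'' \<omega> = (\<Sum>\<xi>\<in>F. g'' (\<xi> + \<eta>0) * \<omega> (\<xi> + \<eta>0))"
      unfolding tpo_def F'_def by (subst sum.reindex) (auto simp: inj_on_def)
    also have "\<dots> = \<omega> \<eta>0 * tpo F g \<omega>"
      unfolding tpo_def g''_def sum_distrib_left using w sp by (intro sum.cong) (auto simp: dual_mult)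
    finally show ?thesis .
  qed
  have n1: "nsq \<mu> (tpo F' g'') = nsq \<mu> (tpo F g)"
    using tp sp by (intro nsq_cong) (simp add: norm_mult dual_norm)
  have n2: "nsq \<mu> (\<lambda>\<omega>. (h \<omega> - z) * tpo F' g'' \<omega>) = nsq \<mu> (\<lambda>\<omega>. (h \<omega> - z) * tpo F g \<omega>)"
    using tp sp by (intro nsq_cong) (simp add: norm_mult dual_norm)
  show ?thesis using lower_pos[OF Sinv Sb C F' pos, of g''] n1 n2 by simp
qed

lemma approx_lower:
  assumes low: "\<And>F g. finite F \<Longrightarrow> nsq \<mu> (tpo F g) \<le> C\<^sup>2 * nsq \<mu> (\<lambda>\<omega>. (h \<omega> - z) * tpo F g \<omega>)"
    and f: "approx f"
  shows "nsq \<mu> f \<le> 4 * C\<^sup>2 * nsq \<mu> (\<lambda>\<omega>. (h \<omega> - z) * f \<omega>)"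
proof -
  have bf: "bdd \<mu> f" using f by (rule approx_bdd)
  have b\<psi>: "bdd \<mu> (\<lambda>\<omega>. h \<omega> - z)" by (intro bdd_diff h_bdd bdd_const)
  obtain M where M: "0 \<le> M" "AE \<omega> in \<mu>. cmod (h \<omega> - z) \<le> M" using b\<psi> by (rule bdd_bound)
  define K where "K = 4 * C\<^sup>2 * M\<^sup>2 + 2"
  have K: "0 < K" unfolding K_def by (simp add: add_nonneg_pos)
  have "nsq \<mu> f \<le> 4 * C\<^sup>2 * nsq \<mu> (\<lambda>\<omega>. (h \<omega> - z) * f \<omega>) + e" if e: "0 < e" for e
  proof -
    obtain F g where Fg: "finite F" "nsq \<mu> (\<lambda>\<omega>. f \<omega> - tpo F g \<omega>) < e / K"
      using f e K unfolding approx_def by (meson divide_pos_pos)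
    define p where "p = tpo F g"
    have bp: "bdd \<mu> p" unfolding p_def using Fg(1) by (rule bdd_tpo)
    define d where "d = nsq \<mu> (\<lambda>\<omega>. f \<omega> - p \<omega>)"
    have d: "d < e / K" "0 \<le> d" using Fg(2) nsq_nonneg unfolding d_def p_def by auto
    have i1: "nsq \<mu> f \<le> 2 * nsq \<mu> p + 2 * d"
      using nsq_add_le[OF bp bdd_diff[OF bf bp]] unfolding d_def by simp
    have i2: "nsq \<mu> p \<le> C\<^sup>2 * nsq \<mu> (\<lambda>\<omega>. (h \<omega> - z) * p \<omega>)" unfolding p_def by (rule low[OF Fg(1)])
    have i3: "nsq \<mu> (\<lambda>\<omega>. (h \<omega> - z) * p \<omega>)
        \<le> 2 * nsq \<mu> (\<lambda>\<omega>. (h \<omega> - z) * f \<omega>) + 2 * nsq \<mu> (\<lambda>\<omega>. (h \<omega> - z) * (p \<omega> - f \<omega>))"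
      using nsq_add_le[OF bdd_mult[OF b\<psi> bf] bdd_mult[OF b\<psi> bdd_diff[OF bp bf]]] by (simp add: algebra_simps)
    have i4: "nsq \<mu> (\<lambda>\<omega>. (h \<omega> - z) * (p \<omega> - f \<omega>)) \<le> M\<^sup>2 * d"
      unfolding d_def nsq_diff_sym[of f p] by (rule nsq_mult_le[OF bdd_diff[OF bp bf] b\<psi> M(2)])
    have C2: "0 \<le> C\<^sup>2" by simp
    have "C\<^sup>2 * nsq \<mu> (\<lambda>\<omega>. (h \<omega> - z) * p \<omega>) \<le> C\<^sup>2 * (2 * nsq \<mu> (\<lambda>\<omega>. (h \<omega> - z) * f \<omega>) + 2 * (M\<^sup>2 * d))"
      using i3 i4 C2 by (intro mult_left_mono) auto
    then have "nsq \<mu> f \<le> 4 * C\<^sup>2 * nsq \<mu> (\<lambda>\<omega>. (h \<omega> - z) * f \<omega>) + K * d"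
      using i1 i2 unfolding K_def by (simp add: algebra_simps)
    moreover have "K * d \<le> e" using d K by (simp add: field_simps)
    ultimately show ?thesis by simp
  qed
  then show ?thesis by (rule field_le_epsilon)
qed

end


context mainctx
begin

lemma h_meas[measurable]: "h \<in> borel_measurable \<mu>" using h_bdd by (rule bdd_meas)

lemma incl1: assumes z: "z \<in> ess_range \<mu> h" shows "z \<in> spectrum_l2_plus (W k)"
proof (rule ccontr)
  assume "z \<notin> spectrum_l2_plus (W k)"
  then obtain S C where Sinv: "\<forall>g\<in>l2_plus. S (\<lambda>\<xi>. W k g \<xi> - z * g \<xi>) = g"
    and Sb0: "\<forall>g\<in>l2_plus. l2_norm (S g) \<le> C * l2_norm g"
    unfolding spectrum_l2_plus_def by blast
  define C' where "C' = max C 1"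
  have C'1: "1 \<le> C'" unfolding C'_def by simp
  have Sb: "\<forall>g\<in>l2_plus. l2_norm (S g) \<le> C' * l2_norm g"
  proof
    fix g :: "'x \<Rightarrow> complex" assume "g \<in> l2_plus"
    then have "l2_norm (S g) \<le> C * l2_norm g" using Sb0 by blast
    also have "\<dots> \<le> C' * l2_norm g" unfolding C'_def by (intro mult_right_mono l2_norm_nonneg) simp
    finally show "l2_norm (S g) \<le> C' * l2_norm g" .
  qed
  have low: "\<And>F g. finite F \<Longrightarrow> nsq \<mu> (tpo F g) \<le> C'\<^sup>2 * nsq \<mu> (\<lambda>\<omega>. (h \<omega> - z) * tpo F g \<omega>)"
    using lower_all[OF Sinv Sb] C'1 by simp
  have main: "\<And>f. approx f \<Longrightarrow> nsq \<mu> f \<le> 4 * C'\<^sup>2 * nsq \<mu> (\<lambda>\<omega>. (h \<omega> - z) * f \<omega>)"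
    by (rule approx_lower[OF low])
  define \<psi> where "\<psi> \<omega> = h \<omega> - z" for \<omega>
  have b\<psi>: "bdd \<mu> \<psi>" unfolding \<psi>_def by (intro bdd_diff h_bdd bdd_const)
  obtain M\<psi> where M\<psi>: "0 \<le> M\<psi>" "AE \<omega> in \<mu>. cmod (\<psi> \<omega>) \<le> M\<psi>" using b\<psi> by (rule bdd_bound)
  define \<epsilon> where "\<epsilon> = 1 / (6 * C')"
  have \<epsilon>: "0 < \<epsilon>" unfolding \<epsilon>_def using C'1 by simp
  have \<epsilon>C: "16 * C'\<^sup>2 * \<epsilon>\<^sup>2 = 4 / 9" unfolding \<epsilon>_def using C'1 by (simp add: field_simps power2_eq_square)
  define M where "M = M\<psi> + 1 + 2 * \<epsilon>"
  have M: "0 < M" "2 * \<epsilon> < M" "M\<psi> \<le> M" unfolding M_def using M\<psi>(1) \<epsilon> by auto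
  define a where "a = \<epsilon>\<^sup>2 / M\<^sup>2"
  have a0: "0 < a" unfolding a_def using \<epsilon> M by simp
  have a4: "4 * a < 1"
  proof -
    have "(2 * \<epsilon>)\<^sup>2 < M\<^sup>2" using M \<epsilon> by (intro power_strict_mono) auto
    then show ?thesis unfolding a_def using M by (simp add: field_simps power2_eq_square)
  qed
  define E where "E = {\<omega> \<in> space \<mu>. cmod (h \<omega> - z) < \<epsilon>}"
  have Em: "E \<in> sets \<mu>" unfolding E_def by measurable
  have "emeasure \<mu> E > 0" using z \<epsilon> unfolding ess_range_def E_def by blast
  then have m: "0 < prob E" by (simp add: emeasure_eq_measure)
  define x where "x \<omega> = 1 - (cmod (\<psi> \<omega>))\<^sup>2 / M\<^sup>2" for \<omega>
  define q where "q N \<omega> = complex_of_real (x \<omega>) ^ N" for N \<omega>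
  have a\<psi>: "approx \<psi>"
  proof -
    have "approx (\<lambda>\<omega>. 1 * h \<omega> + (-1) * z)" by (rule approx_lin[OF h_approx approx_const])
    moreover have "(\<lambda>\<omega>. 1 * h \<omega> + (-1) * z) = \<psi>" unfolding \<psi>_def by auto
    ultimately show ?thesis by simp
  qed
  have aq: "approx (q N)" for N
  proof -
    have "approx (\<lambda>\<omega>. \<psi> \<omega> * cnj (\<psi> \<omega>))" by (rule approx_mult[OF a\<psi> approx_cnj[OF a\<psi>]])
    then have "approx (\<lambda>\<omega>. 1 * 1 + complex_of_real (- (1 / M\<^sup>2)) * (\<psi> \<omega> * cnj (\<psi> \<omega>)))"
      by (rule approx_lin[OF approx_const])
    then have "approx (\<lambda>\<omega>. (1 * 1 + complex_of_real (- (1 / M\<^sup>2)) * (\<psi> \<omega> * cnj (\<psi> \<omega>))) ^ N)"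
      by (rule approx_pow)
    moreover have "(\<lambda>\<omega>. (1 * 1 + complex_of_real (- (1 / M\<^sup>2)) * (\<psi> \<omega> * cnj (\<psi> \<omega>))) ^ N) = q N"
    proof
      fix \<omega>
      have "1 * 1 + complex_of_real (- (1 / M\<^sup>2)) * (\<psi> \<omega> * cnj (\<psi> \<omega>)) = complex_of_real (x \<omega>)"
        unfolding x_def mult_cnj_sq by (simp add: field_simps)
      then show "(1 * 1 + complex_of_real (- (1 / M\<^sup>2)) * (\<psi> \<omega> * cnj (\<psi> \<omega>))) ^ N = q N \<omega>"
        unfolding q_def by simp
    qed
    ultimately show ?thesis by simp
  qed
  have qsq: "(cmod (q N \<omega>))\<^sup>2 = ((x \<omega>)\<^sup>2) ^ N" for N \<omega>
    unfolding q_def by (simp add: norm_power power_mult[symmetric] power_even_abs mult.commute)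
  have bq: "bdd \<mu> (q N)" for N using aq by (rule approx_bdd)
  have lowq: "((1 - a)\<^sup>2) ^ N * prob E \<le> nsq \<mu> (q N)" for N
  proof -
    have "(LINT \<omega>|\<mu>. ((1 - a)\<^sup>2) ^ N * indicator E \<omega>) \<le> (LINT \<omega>|\<mu>. (cmod (q N \<omega>))\<^sup>2)"
    proof (rule integral_mono)
      show "integrable \<mu> (\<lambda>\<omega>. ((1 - a)\<^sup>2) ^ N * indicator E \<omega>)"
        using Em by (intro integrable_mult_right integrable_real_indicator) (auto simp: emeasure_eq_measure)
      show "integrable \<mu> (\<lambda>\<omega>. (cmod (q N \<omega>))\<^sup>2)" by (rule nsq_integrable[OF bq])
      fix \<omega> assume "\<omega> \<in> space \<mu>"
      show "((1 - a)\<^sup>2) ^ N * indicator E \<omega> \<le> (cmod (q N \<omega>))\<^sup>2"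
      proof (cases "\<omega> \<in> E")
        case True
        then have "cmod (\<psi> \<omega>) < \<epsilon>" unfolding E_def \<psi>_def by simp
        then have "(cmod (\<psi> \<omega>))\<^sup>2 < \<epsilon>\<^sup>2" by (intro power_strict_mono) auto
        then have "(cmod (\<psi> \<omega>))\<^sup>2 / M\<^sup>2 < a" unfolding a_def using M by (intro divide_strict_right_mono) auto
        then have "1 - a \<le> x \<omega>" unfolding x_def by simp
        moreover have "0 \<le> 1 - a" using a4 a0 by simp
        ultimately have "(1 - a)\<^sup>2 \<le> (x \<omega>)\<^sup>2" by (intro power_mono)
        then have "((1 - a)\<^sup>2) ^ N \<le> ((x \<omega>)\<^sup>2) ^ N" by (rule power_mono) auto
        then show ?thesis using True unfolding qsq by simp
      next
        case False then show ?thesis unfolding qsq by simp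
      qed
    qed
    also have "(LINT \<omega>|\<mu>. ((1 - a)\<^sup>2) ^ N * indicator E \<omega>) = ((1 - a)\<^sup>2) ^ N * prob E"
      using Em by (simp add: Int_absorb1 sets.sets_into_space)
    finally show ?thesis unfolding nsq_def .
  qed
  have upq: "nsq \<mu> (\<lambda>\<omega>. (h \<omega> - z) * q N \<omega>) \<le> 4 * \<epsilon>\<^sup>2 * nsq \<mu> (q N) + M\<^sup>2 * ((1 - 4 * a)\<^sup>2) ^ N" for N
  proof -
    have "nsq \<mu> (\<lambda>\<omega>. (h \<omega> - z) * q N \<omega>) \<le> (LINT \<omega>|\<mu>. 4 * \<epsilon>\<^sup>2 * (cmod (q N \<omega>))\<^sup>2 + M\<^sup>2 * ((1 - 4 * a)\<^sup>2) ^ N)"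
      unfolding nsq_def
    proof (rule integral_mono_AE)
      show "integrable \<mu> (\<lambda>\<omega>. (cmod ((h \<omega> - z) * q N \<omega>))\<^sup>2)"
        by (intro nsq_integrable bdd_mult bq bdd_diff h_bdd bdd_const)
      show "integrable \<mu> (\<lambda>\<omega>. 4 * \<epsilon>\<^sup>2 * (cmod (q N \<omega>))\<^sup>2 + M\<^sup>2 * ((1 - 4 * a)\<^sup>2) ^ N)"
        by (intro Bochner_Integration.integrable_add integrable_mult_right nsq_integrable bq) simp
      show "AE \<omega> in \<mu>. (cmod ((h \<omega> - z) * q N \<omega>))\<^sup>2 \<le> 4 * \<epsilon>\<^sup>2 * (cmod (q N \<omega>))\<^sup>2 + M\<^sup>2 * ((1 - 4 * a)\<^sup>2) ^ N"
        using M\<psi>(2)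
      proof eventually_elim
        fix \<omega> assume b: "cmod (\<psi> \<omega>) \<le> M\<psi>"
        define t where "t = (cmod (\<psi> \<omega>))\<^sup>2"
        have t0: "0 \<le> t" unfolding t_def by simp
        have tM: "t \<le> M\<^sup>2" unfolding t_def using b M M\<psi>(1) by (intro power_mono) auto
        have yN: "0 \<le> ((x \<omega>)\<^sup>2) ^ N" by simp
        have lhs: "(cmod ((h \<omega> - z) * q N \<omega>))\<^sup>2 = t * ((x \<omega>)\<^sup>2) ^ N"
          unfolding t_def \<psi>_def by (simp add: norm_mult power_mult_distrib qsq[symmetric])
        have c0: "0 \<le> M\<^sup>2 * ((1 - 4 * a)\<^sup>2) ^ N" by simp
        show "(cmod ((h \<omega> - z) * q N \<omega>))\<^sup>2 \<le> 4 * \<epsilon>\<^sup>2 * (cmod (q N \<omega>))\<^sup>2 + M\<^sup>2 * ((1 - 4 * a)\<^sup>2) ^ N"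
        proof (cases "t < 4 * \<epsilon>\<^sup>2")
          case True
          have "t * ((x \<omega>)\<^sup>2) ^ N \<le> 4 * \<epsilon>\<^sup>2 * ((x \<omega>)\<^sup>2) ^ N" using True yN by (intro mult_right_mono) auto
          then show ?thesis unfolding lhs qsq using c0 by linarith
        next
          case False
          have x0: "0 \<le> x \<omega>" unfolding x_def using tM M unfolding t_def by (simp add: field_simps)
          have "4 * \<epsilon>\<^sup>2 / M\<^sup>2 \<le> t / M\<^sup>2" using False M by (intro divide_right_mono) auto
          then have x1: "x \<omega> \<le> 1 - 4 * a" unfolding x_def a_def t_def by simp
          have "(x \<omega>)\<^sup>2 \<le> (1 - 4 * a)\<^sup>2" using x0 x1 by (intro power_mono)
          then have y: "((x \<omega>)\<^sup>2) ^ N \<le> ((1 - 4 * a)\<^sup>2) ^ N" by (rule power_mono) auto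
          have "t * ((x \<omega>)\<^sup>2) ^ N \<le> M\<^sup>2 * ((1 - 4 * a)\<^sup>2) ^ N" using tM y t0 yN by (intro mult_mono) auto
          moreover have "0 \<le> 4 * \<epsilon>\<^sup>2 * ((x \<omega>)\<^sup>2) ^ N" by simp
          ultimately show ?thesis unfolding lhs qsq by linarith
        qed
      qed
    qed
    also have "\<dots> = 4 * \<epsilon>\<^sup>2 * nsq \<mu> (q N) + M\<^sup>2 * ((1 - 4 * a)\<^sup>2) ^ N"
      unfolding nsq_def by (simp add: nsq_integrable[OF bq] prob_space)
    finally show ?thesis .
  qed
  define K where "K = 8 * C'\<^sup>2 * M\<^sup>2"
  have K: "0 < K" unfolding K_def using C'1 M by simp
  have key: "((1 - a)\<^sup>2) ^ N * prob E \<le> K * ((1 - 4 * a)\<^sup>2) ^ N" for N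
  proof -
    have "nsq \<mu> (q N) \<le> 4 * C'\<^sup>2 * (4 * \<epsilon>\<^sup>2 * nsq \<mu> (q N) + M\<^sup>2 * ((1 - 4 * a)\<^sup>2) ^ N)"
      using main[OF aq[of N]] upq[of N] C'1 by (meson order_trans mult_left_mono zero_le_mult_iff zero_le_numeral zero_le_power2)
    also have "\<dots> = 4 / 9 * nsq \<mu> (q N) + 4 * C'\<^sup>2 * M\<^sup>2 * ((1 - 4 * a)\<^sup>2) ^ N"
      using \<epsilon>C by (simp add: algebra_simps)
    finally have "nsq \<mu> (q N) \<le> 36 / 5 * C'\<^sup>2 * M\<^sup>2 * ((1 - 4 * a)\<^sup>2) ^ N" by simp
    also have "\<dots> \<le> K * ((1 - 4 * a)\<^sup>2) ^ N" unfolding K_def by (intro mult_right_mono) auto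
    finally show ?thesis using lowq[of N] by simp
  qed
  define \<rho> where "\<rho> = (1 - 4 * a)\<^sup>2 / (1 - a)\<^sup>2"
  have pa: "0 < (1 - a)\<^sup>2" using a4 a0 by simp
  have \<rho>0: "0 \<le> \<rho>" unfolding \<rho>_def by simp
  have \<rho>1: "\<rho> < 1"
  proof -
    have "(1 - 4 * a)\<^sup>2 < (1 - a)\<^sup>2" using a0 a4 by (intro power_strict_mono) auto
    then show ?thesis unfolding \<rho>_def using pa by simp
  qed
  have "(\<lambda>N. \<rho> ^ N) \<longlonglongrightarrow> 0" using \<rho>0 \<rho>1 by (intro LIMSEQ_power_zero) auto
  then have "\<forall>\<^sub>F N in sequentially. \<rho> ^ N < prob E / K" using m K by (intro order_tendstoD(2)) auto
  then obtain N where N: "\<rho> ^ N < prob E / K" by (auto simp: eventually_sequentially)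
  have e: "((1 - 4 * a)\<^sup>2) ^ N = \<rho> ^ N * ((1 - a)\<^sup>2) ^ N"
    unfolding \<rho>_def using pa by (simp add: power_divide)
  have "((1 - a)\<^sup>2) ^ N * prob E \<le> K * \<rho> ^ N * ((1 - a)\<^sup>2) ^ N" using key[of N] unfolding e by simp
  moreover have "K * \<rho> ^ N < prob E" using N K by (simp add: field_simps)
  moreover have "0 < ((1 - a)\<^sup>2) ^ N" using pa by simp
  ultimately show False by (smt (z3) mult.commute mult_strict_right_mono)
qed

end


lemma cmod_one_minus_sq: "(cmod (1 - u))\<^sup>2 = 1 - 2 * Re u + (cmod u)\<^sup>2"
  unfolding cmod_power2 by (simp add: power2_eq_square algebra_simps)

lemma inner_complex_Re: "inner a (w::complex) = Re (cnj a * w)"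
  by (simp add: inner_complex_def)

context mainctx
begin

lemma ae_in_closed:
  assumes K: "closed K" "ess_range \<mu> h \<subseteq> K"
  shows "AE \<omega> in \<mu>. h \<omega> \<in> K"
proof -
  have ex: "\<exists>e>0. emeasure \<mu> {\<omega> \<in> space \<mu>. cmod (h \<omega> - w) < e} = 0" if w: "w \<notin> K" for w
  proof -
    have "w \<notin> ess_range \<mu> h" using w K(2) by blast
    then show ?thesis unfolding ess_range_def by (auto simp: not_less)
  qed
  define eps where "eps w = (SOME e. e > 0 \<and> emeasure \<mu> {\<omega> \<in> space \<mu>. cmod (h \<omega> - w) < e} = 0)" for w
  have eps: "eps w > 0" "emeasure \<mu> {\<omega> \<in> space \<mu>. cmod (h \<omega> - w) < eps w} = 0" if "w \<notin> K" for w
    using someI_ex[OF ex[OF that]] unfolding eps_def by auto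
  define \<F> where "\<F> = (\<lambda>w. ball w (eps w)) ` (- K)"
  obtain \<F>' where F': "\<F>' \<subseteq> \<F>" "countable \<F>'" "\<Union>\<F>' = \<Union>\<F>"
    by (rule Lindelof[of \<F>]) (auto simp: \<F>_def)
  have "AE \<omega> in \<mu>. h \<omega> \<notin> B" if B: "B \<in> \<F>'" for B
  proof -
    obtain w where w: "w \<notin> K" "B = ball w (eps w)" using B F'(1) unfolding \<F>_def by auto
    have N: "{\<omega> \<in> space \<mu>. cmod (h \<omega> - w) < eps w} \<in> null_sets \<mu>"
      using eps(2)[OF w(1)] by (auto simp: null_sets_def)
    show ?thesis
      by (rule AE_I'[OF N]) (auto simp: w(2) dist_norm norm_minus_commute)
  qed
  then have "AE \<omega> in \<mu>. \<forall>B\<in>\<F>'. h \<omega> \<notin> B" using F'(2) by (simp add: AE_ball_countable)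
  then show ?thesis
  proof eventually_elim
    fix \<omega> assume a: "\<forall>B\<in>\<F>'. h \<omega> \<notin> B"
    show "h \<omega> \<in> K"
    proof (rule ccontr)
      assume "h \<omega> \<notin> K"
      then have "h \<omega> \<in> ball (h \<omega>) (eps (h \<omega>))" using eps(1) by simp
      then have "h \<omega> \<in> \<Union>\<F>" unfolding \<F>_def using \<open>h \<omega> \<notin> K\<close> by blast
      then show False using a F'(3) by auto
    qed
  qed
qed

lemma coef_one: "coef (\<lambda>_. 1) \<zeta> = (if \<zeta> = 0 then 1 else 0)"
proof -
  have "coef (\<lambda>_. 1) \<zeta> = (LINT \<omega>|\<mu>. cnj (\<omega> \<zeta>))" unfolding coef_def ip_def by simp
  also have "\<dots> = cnj (LINT \<omega>|\<mu>. \<omega> \<zeta>)" by (rule Bochner_Integration.integral_cnj)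
  finally have "coef (\<lambda>_. 1) \<zeta> = cnj (LINT \<omega>|\<mu>. \<omega> \<zeta>)" .
  then show ?thesis by (simp add: int_ech)
qed

lemma incl2: assumes z: "z \<notin> closure (convex hull (ess_range \<mu> h))" shows "z \<notin> spectrum_l2_plus (W k)"
proof -
  define K where "K = closure (convex hull (ess_range \<mu> h))"
  have Kc: "closed K" "convex K" "ess_range \<mu> h \<subseteq> K" unfolding K_def
    by (auto intro: convex_closure convex_convex_hull closure_subset[THEN subsetD] hull_subset[THEN subsetD])
  have aeK: "AE \<omega> in \<mu>. h \<omega> \<in> K" by (rule ae_in_closed[OF Kc(1,3)])
  obtain a b where ab: "inner a z < b" "\<forall>x\<in>K. b < inner a x"
    using separating_hyperplane_closed_point[OF Kc(2,1) z[folded K_def]] by blast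
  define \<delta> where "\<delta> = b - inner a z"
  have \<delta>: "0 < \<delta>" unfolding \<delta>_def using ab by simp
  have aeRe: "AE \<omega> in \<mu>. \<delta> < Re (cnj a * (h \<omega> - z))"
    using aeK
  proof eventually_elim
    fix \<omega> assume "h \<omega> \<in> K"
    then have "b < inner a (h \<omega>)" using ab by blast
    moreover have "Re (cnj a * (h \<omega> - z)) = inner a (h \<omega>) - inner a z"
      unfolding inner_complex_Re[symmetric] by (rule inner_diff_right)
    ultimately show "\<delta> < Re (cnj a * (h \<omega> - z))" unfolding \<delta>_def by simp
  qed
  have "K \<noteq> {}"
  proof
    assume "K = {}"
    then have "AE \<omega> in \<mu>. False" using aeK by simp
    then show False by simp
  qed
  then obtain x0 where "x0 \<in> K" by blast
  then have a0: "a \<noteq> 0" using ab by fastforce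
  obtain M0 where M0: "0 \<le> M0" "AE \<omega> in \<mu>. cmod (h \<omega> - z) \<le> M0"
    using bdd_diff[OF h_bdd bdd_const] by (rule bdd_bound)
  define den where "den = (cmod a)\<^sup>2 * M0\<^sup>2 + \<delta>\<^sup>2 + 1"
  have den: "0 < den" "(cmod a)\<^sup>2 * M0\<^sup>2 < den" "\<delta>\<^sup>2 < den" unfolding den_def
  proof -
    have "0 \<le> (cmod a)\<^sup>2 * M0\<^sup>2" "0 \<le> \<delta>\<^sup>2" by simp_all
    then show "0 < (cmod a)\<^sup>2 * M0\<^sup>2 + \<delta>\<^sup>2 + 1" "(cmod a)\<^sup>2 * M0\<^sup>2 < (cmod a)\<^sup>2 * M0\<^sup>2 + \<delta>\<^sup>2 + 1"
      "\<delta>\<^sup>2 < (cmod a)\<^sup>2 * M0\<^sup>2 + \<delta>\<^sup>2 + 1" by linarith+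
  qed
  define t where "t = \<delta> / den"
  have t: "0 < t" unfolding t_def using \<delta> den by simp
  have t1: "t * ((cmod a)\<^sup>2 * M0\<^sup>2) \<le> \<delta>" unfolding t_def using den \<delta> by (simp add: field_simps)
  have t2: "t * \<delta> < 1" unfolding t_def using den \<delta> by (simp add: field_simps power2_eq_square)
  define s where "s = complex_of_real t * cnj a"
  have s0: "s \<noteq> 0" unfolding s_def using t a0 by simp
  define r where "r = sqrt (1 - t * \<delta>)"
  have r0: "0 \<le> r" and r1: "r < 1" unfolding r_def using t2 t \<delta> by auto
  define \<phi> where "\<phi> \<omega> = 1 - s * (h \<omega> - z)" for \<omega>
  have b\<phi>: "bdd \<mu> \<phi>" unfolding \<phi>_def by (intro bdd_diff bdd_const bdd_scale h_bdd)
  have ae\<phi>: "AE \<omega> in \<mu>. cmod (\<phi> \<omega>) \<le> r"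
    using aeRe M0(2)
  proof eventually_elim
    fix \<omega> assume re: "\<delta> < Re (cnj a * (h \<omega> - z))" and bd: "cmod (h \<omega> - z) \<le> M0"
    define u where "u = s * (h \<omega> - z)"
    have Reu: "Re u = t * Re (cnj a * (h \<omega> - z))" unfolding u_def s_def by (simp add: mult.assoc)
    have "t * \<delta> \<le> Re u" unfolding Reu using re t by simp
    moreover have "(cmod u)\<^sup>2 \<le> t * \<delta>"
    proof -
      have "(cmod u)\<^sup>2 = t\<^sup>2 * ((cmod a)\<^sup>2 * (cmod (h \<omega> - z))\<^sup>2)" unfolding u_def s_def
        using t by (simp add: norm_mult power_mult_distrib)
      also have "\<dots> \<le> t\<^sup>2 * ((cmod a)\<^sup>2 * M0\<^sup>2)" using bd by (intro mult_left_mono power_mono) auto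
      also have "\<dots> = t * (t * ((cmod a)\<^sup>2 * M0\<^sup>2))" by (simp add: power2_eq_square)
      also have "\<dots> \<le> t * \<delta>" using t1 t by (intro mult_left_mono) auto
      finally show ?thesis .
    qed
    ultimately have "(cmod (1 - u))\<^sup>2 \<le> r\<^sup>2" unfolding cmod_one_minus_sq r_def using t2 by simp
    then show "cmod (\<phi> \<omega>) \<le> r" unfolding \<phi>_def u_def[symmetric] using r0 by (rule power2_le_imp_le)
  qed
  define d0 where "d0 \<zeta> = (if \<zeta> = 0 then 1 else 0 :: complex)" for \<zeta> :: 'x
  have coef\<phi>: "coef \<phi> = (\<lambda>\<zeta>. (1 + s * z) * d0 \<zeta> + (- s) * k \<zeta>)"
  proof
    fix \<zeta>
    have e: "\<phi> = (\<lambda>\<omega>. (1 + s * z) * 1 - s * h \<omega>)" unfolding \<phi>_def by (auto simp: algebra_simps)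
    have "coef \<phi> \<zeta> = (1 + s * z) * coef (\<lambda>_. 1) \<zeta> - s * coef h \<zeta>"
    proof -
      have "ip \<mu> (\<lambda>\<omega>. (1 + s * z) * 1 - s * h \<omega>) (\<lambda>\<omega>. \<omega> \<zeta>)
          = ip \<mu> (\<lambda>\<omega>. (1 + s * z) * 1) (\<lambda>\<omega>. \<omega> \<zeta>) - ip \<mu> (\<lambda>\<omega>. s * h \<omega>) (\<lambda>\<omega>. \<omega> \<zeta>)"
        by (rule ip_diff_left[OF bdd_const bdd_scale[OF h_bdd] bdd_ech])
      also have "ip \<mu> (\<lambda>\<omega>. (1 + s * z) * 1) (\<lambda>\<omega>. \<omega> \<zeta>) = (1 + s * z) * ip \<mu> (\<lambda>_. 1) (\<lambda>\<omega>. \<omega> \<zeta>)"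
        by (rule ip_scale_left)
      also have "ip \<mu> (\<lambda>\<omega>. s * h \<omega>) (\<lambda>\<omega>. \<omega> \<zeta>) = s * ip \<mu> h (\<lambda>\<omega>. \<omega> \<zeta>)"
        by (rule ip_scale_left)
      finally show ?thesis unfolding e coef_def .
    qed
    then show "coef \<phi> \<zeta> = (1 + s * z) * d0 \<zeta> + (- s) * k \<zeta>"
      by (simp add: coef_one coef_h d0_def)
  qed
  define B where "B f = (\<lambda>\<xi>. f \<xi> - s * (W k f \<xi> - z * f \<xi>))" for f :: "'x \<Rightarrow> complex"
  have d0l2: "l2 d0" unfolding d0_def by (rule l2_delta)
  have Bconv: "B f = (\<lambda>\<xi>. if 0 \<le> \<xi> then conv (coef \<phi>) f \<xi> else 0)" if f: "f \<in> l2_plus" for f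
  proof
    fix \<xi>
    have fl: "l2 f" using f unfolding l2_plus_iff by blast
    have "conv (coef \<phi>) f \<xi> = (1 + s * z) * conv d0 f \<xi> + (- s) * conv k f \<xi>"
      unfolding coef\<phi> by (rule conv_lin1[OF d0l2 k_l2 fl])
    also have "conv d0 f \<xi> = f \<xi>" unfolding d0_def by (rule conv_delta)
    finally have c: "conv (coef \<phi>) f \<xi> = (1 + s * z) * f \<xi> + (- s) * conv k f \<xi>" .
    show "B f \<xi> = (if 0 \<le> \<xi> then conv (coef \<phi>) f \<xi> else 0)"
      using f unfolding B_def W_conv c l2_plus_iff by (auto simp: algebra_simps)
  qed
  interpret N: neumann B r
  proof
    fix g :: "'x \<Rightarrow> complex" assume g: "g \<in> l2_plus"
    have gl: "l2 g" using g unfolding l2_plus_iff by blast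
    show "B g \<in> l2_plus" unfolding Bconv[OF g] l2_plus_iff
      using toeplitz_bound(1)[OF b\<phi> ae\<phi> r0 gl] by auto
    show "l2_norm (B g) \<le> r * l2_norm g" unfolding Bconv[OF g]
      using toeplitz_bound(2)[OF b\<phi> ae\<phi> r0 gl] by simp
  next
    fix f g :: "'x \<Rightarrow> complex" and c1 c2 :: complex
    assume f: "f \<in> l2_plus" and g: "g \<in> l2_plus"
    have fl: "l2 f" and gl: "l2 g" using f g unfolding l2_plus_iff by auto
    show "B (\<lambda>\<xi>. c1 * f \<xi> + c2 * g \<xi>) = (\<lambda>\<xi>. c1 * B f \<xi> + c2 * B g \<xi>)"
      unfolding B_def W_conv by (auto simp: conv_lin2[OF k_l2 fl gl] algebra_simps)
  next
    show "0 \<le> r" by (rule r0)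
  next
    show "r < 1" by (rule r1)
  qed
  obtain S0 where S0: "\<forall>g\<in>l2_plus. S0 g \<in> l2_plus"
    "\<forall>f\<in>l2_plus. \<forall>g\<in>l2_plus. \<forall>a b. S0 (\<lambda>\<xi>. a * f \<xi> + b * g \<xi>) = (\<lambda>\<xi>. a * S0 f \<xi> + b * S0 g \<xi>)"
    "\<exists>C. \<forall>g\<in>l2_plus. l2_norm (S0 g) \<le> C * l2_norm g"
    "\<forall>g\<in>l2_plus. S0 (\<lambda>\<xi>. g \<xi> - B g \<xi>) = g"
    "\<forall>g\<in>l2_plus. (\<lambda>\<xi>. S0 g \<xi> - B (S0 g) \<xi>) = g"
    using N.inverse_exists by blast
  obtain C0 where C0: "\<forall>g\<in>l2_plus. l2_norm (S0 g) \<le> C0 * l2_norm g" using S0(3) by blast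
  have sg: "(\<lambda>\<xi>. s * g \<xi>) \<in> l2_plus" if "g \<in> l2_plus" for g
    using l2_plus_lin[OF that that, of s 0] by simp
  have nsg: "l2_norm (\<lambda>\<xi>. s * g \<xi>) = cmod s * l2_norm g" if g: "g \<in> l2_plus" for g
  proof -
    have "(\<Sum>\<^sub>\<infinity>\<xi>. (cmod (s * g \<xi>))\<^sup>2) = (cmod s)\<^sup>2 * (\<Sum>\<^sub>\<infinity>\<xi>. (cmod (g \<xi>))\<^sup>2)"
      using g unfolding l2_plus_def by (simp add: norm_mult power_mult_distrib infsum_cmult_right)
    then show ?thesis unfolding l2_norm_def by (simp add: real_sqrt_mult)
  qed
  define S where "S g = S0 (\<lambda>\<xi>. s * g \<xi>)" for g
  have "\<exists>S. (\<forall>g\<in>l2_plus. S g \<in> l2_plus) \<and>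
      (\<forall>f\<in>l2_plus. \<forall>g\<in>l2_plus. \<forall>a b. S (\<lambda>\<xi>. a * f \<xi> + b * g \<xi>) = (\<lambda>\<xi>. a * S f \<xi> + b * S g \<xi>)) \<and>
      (\<exists>C. \<forall>g\<in>l2_plus. l2_norm (S g) \<le> C * l2_norm g) \<and>
      (\<forall>g\<in>l2_plus. S (\<lambda>\<xi>. W k g \<xi> - z * g \<xi>) = g) \<and>
      (\<forall>g\<in>l2_plus. (\<lambda>\<xi>. W k (S g) \<xi> - z * S g \<xi>) = g)"
  proof (intro exI[of _ S] conjI ballI allI)
    fix g :: "'x \<Rightarrow> complex" assume g: "g \<in> l2_plus"
    show "S g \<in> l2_plus" unfolding S_def using S0(1) sg[OF g] by blast
  next
    fix f g :: "'x \<Rightarrow> complex" and c1 c2 :: complex assume f: "f \<in> l2_plus" and g: "g \<in> l2_plus"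
    have "S (\<lambda>\<xi>. c1 * f \<xi> + c2 * g \<xi>) = S0 (\<lambda>\<xi>. c1 * (s * f \<xi>) + c2 * (s * g \<xi>))"
      unfolding S_def by (simp add: algebra_simps)
    also have "\<dots> = (\<lambda>\<xi>. c1 * S f \<xi> + c2 * S g \<xi>)"
      unfolding S_def by (rule S0(2)[rule_format, OF sg[OF f] sg[OF g]])
    finally show "S (\<lambda>\<xi>. c1 * f \<xi> + c2 * g \<xi>) = (\<lambda>\<xi>. c1 * S f \<xi> + c2 * S g \<xi>)" .
  next
    show "\<exists>C. \<forall>g\<in>l2_plus. l2_norm (S g) \<le> C * l2_norm g"
    proof (intro exI[of _ "C0 * cmod s"] ballI)
      fix g :: "'x \<Rightarrow> complex" assume g: "g \<in> l2_plus"
      have "l2_norm (S g) \<le> C0 * l2_norm (\<lambda>\<xi>. s * g \<xi>)" unfolding S_def using C0 sg[OF g] by blast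
      then show "l2_norm (S g) \<le> C0 * cmod s * l2_norm g" unfolding nsg[OF g] by (simp add: mult.assoc)
    qed
  next
    fix g :: "'x \<Rightarrow> complex" assume g: "g \<in> l2_plus"
    have "(\<lambda>\<xi>. s * (W k g \<xi> - z * g \<xi>)) = (\<lambda>\<xi>. g \<xi> - B g \<xi>)" unfolding B_def by auto
    then show "S (\<lambda>\<xi>. W k g \<xi> - z * g \<xi>) = g" unfolding S_def using S0(4) g by simp
  next
    fix g :: "'x \<Rightarrow> complex" assume g: "g \<in> l2_plus"
    have u: "S g \<in> l2_plus" unfolding S_def using S0(1) sg[OF g] by blast
    have eq: "(\<lambda>\<xi>. S g \<xi> - B (S g) \<xi>) = (\<lambda>\<xi>. s * g \<xi>)" unfolding S_def by (rule S0(5)[rule_format, OF sg[OF g]])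
    have "s * (W k (S g) \<xi> - z * S g \<xi>) = s * g \<xi>" for \<xi>
    proof -
      have "S g \<xi> - B (S g) \<xi> = s * g \<xi>" using fun_cong[OF eq, of \<xi>] by simp
      then show ?thesis unfolding B_def by simp
    qed
    then show "(\<lambda>\<xi>. W k (S g) \<xi> - z * S g \<xi>) = g" using s0 by auto
  qed
  then show ?thesis unfolding spectrum_l2_plus_def mem_Collect_eq not_not .
qed

end

theorem mainTheorem6:
  fixes \<mu> :: "('x::linordered_ab_group_add \<Rightarrow> complex) measure"
    and k :: "'x \<Rightarrow> complex"
    and h :: "('x \<Rightarrow> complex) \<Rightarrow> complex"
  assumes "haar_dual \<mu>"
    and "(\<lambda>\<xi>. (cmod (k \<xi>))\<^sup>2) summable_on UNIV"
    and "is_check \<mu> k h"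
    and "\<exists>C. AE x in \<mu>. cmod (h x) \<le> C"
  shows "ess_range \<mu> h \<subseteq> spectrum_l2_plus (W k) \<and>
         spectrum_l2_plus (W k) \<subseteq> closure (convex hull (ess_range \<mu> h))"
proof -
  interpret mainctx \<mu> k h
    using assms by unfold_locales (auto simp: haar_def)
  show ?thesis using incl1 incl2 by blast
qed


end
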